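(* Let $(x,y,z,v)(t)$, $t\in\mathbb R$, be a normal extremal ($M=1$) starting at the identity with $\varphi_3=\varphi_4=0$. Then $\theta(t)\equiv\theta_0$ for some constant $\theta_0$. The extremals with these data are a single one-parameter subgroup $x(t)=u_1(\theta_0)t$, $y(t)=u_2(\theta_0)t$, $z\equiv v\equiv0$ (with $u_1(\theta_0)=\frac{r'(\theta_0)\sin\theta_0+r(\theta_0)\cos\theta_0}{r^2(\theta_0)}$, $u_2(\theta_0)=\frac{r(\theta_0)\sin\theta_0-r'(\theta_0)\cos\theta_0}{r^2(\theta_0)}$) if and only if the usual derivative $r'(\theta_0)$ exists. In all cases every such extremal is a metric straight line in $(G,d)$.
   Context: Let $\mathfrak g$ be the Engel algebra with basis $X,Y,Z,V$, $[X,Y]=Z$, $[X,Z]=V$, all other brackets of basis elements zero; $G$ the corresponding connected simply connected Lie group, with coordinates of the first kind $(x,y,z,v)$ (identity $=0$). Let $F$ be an arbitrary norm on $\mathbb R^2$, $U=\{u:F(u)\le1\}$, where $(u_1,u_2)$ is identified with $u_1X(e)+u_2Y(e)$; $d$ is the left-invariant sub-Finsler metric on $G$ defined by the distribution spanned by $X,Y$ and the norm $F$ (length of an admissible curve with control $u$ is $\int F(u(t))dt$). The control system is $\dot x=u_1,\ \dot y=u_2,\ \dot z=\tfrac12(xu_2-yu_1),\ \dot v=-\tfrac12(z+\tfrac16xy)u_1+\tfrac1{12}x^2u_2$, measurable $u(t)\in U$, $x(0)=y(0)=z(0)=v(0)=0$. An extremal is a trajectory with control $u(t)$ for which there is a nowhere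 vanishing absolutely continuous $\psi=(\psi_1,\dots,\psi_4)$ with a.e. $\dot\psi_1=\tfrac1{12}\psi_4yu_1-(\tfrac12\psi_3+\tfrac16\psi_4x)u_2$, $\dot\psi_2=(\tfrac12\psi_3+\tfrac1{12}\psi_4x)u_1$, $\dot\psi_3=\tfrac12\psi_4u_1$, $\dot\psi_4=0$ and $h_1u_1(t)+h_2u_2(t)=\max_{u\in U}(h_1u_1+h_2u_2)=M$ a.e., with $h_1=\psi_1-\tfrac12\psi_3y-\tfrac1{12}\psi_4xy-\tfrac12\psi_4z$, $h_2=\psi_2+\tfrac12\psi_3x+\tfrac1{12}\psi_4x^2$, $M\ge0$ constant; normal means $M>0$, normalized to $M=1$. $\varphi_i=\psi_i(0)$. $F_U(h)=\max_{u\in U}h\cdot u$, $U^*=\{h:F_U(h)\le1\}$; $r(\theta)>0$ with $F_U(r(\theta)\cos\theta,r(\theta)\sin\theta)=1$ is the polar equation of $\partial U^*$; $r'(\theta)$ denotes any number between the one-sided derivatives of $r$ at $\theta$. For $M=1$, $\theta(t)$ is a continuous function with $(h_1(t),h_2(t))=r(\theta(t))(\cos\theta(t),\sin\theta(t))$. A metric straight line is a curve $\gamma:\mathbb R\to G$ with $d(\gamma(s),\gamma(t))=|s-t|$ for all $s,t$. *)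

theory Defs
  imports "HOL-Analysis.Analysis"
begin

type_synonym pt4 = "real \<times> real \<times> real \<times> real"

text \<open>F is a norm on R^2 (identified with span of X(e), Y(e)).\<close>
definition is_norm :: "(real \<times> real \<Rightarrow> real) \<Rightarrow> bool" where
  "is_norm F \<longleftrightarrow> (\<forall>u. 0 \<le> F u) \<and> (\<forall>u. F u = 0 \<longleftrightarrow> u = 0) \<and>
     (\<forall>c u. F (c *\<^sub>R u) = \<bar>c\<bar> * F u) \<and> (\<forall>u w. F (u + w) \<le> F u + F w)"

definition FU :: "(real \<times> real \<Rightarrow> real) \<Rightarrow> real \<times> real \<Rightarrow> real" where
  "FU F h = Sup ((\<lambda>u. fst h * fst u + snd h * snd u) ` {u. F u \<le> 1})"

text \<open>polar equation r(theta) of the boundary of U^*\<close>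
definition rpol :: "(real \<times> real \<Rightarrow> real) \<Rightarrow> real \<Rightarrow> real" where
  "rpol F \<theta> = (THE \<rho>. 0 < \<rho> \<and> FU F (\<rho> * cos \<theta>, \<rho> * sin \<theta>) = 1)"

definition abs_cont_on :: "real set \<Rightarrow> (real \<Rightarrow> 'a::real_normed_vector) \<Rightarrow> bool" where
  "abs_cont_on S f \<longleftrightarrow> (\<forall>e>0. \<exists>d>0. \<forall>(n::nat) (a::nat \<Rightarrow> real) b.
     (\<forall>i<n. a i \<le> b i \<and> {a i..b i} \<subseteq> S) \<and> disjoint_family_on (\<lambda>i. {a i<..<b i}) {..<n} \<and>
     (\<Sum>i<n. b i - a i) < d \<longrightarrow> (\<Sum>i<n. norm (f (b i) - f (a i))) < e)"

text \<open>right-hand side of the control system (u1 X + u2 Y in coordinates of the first kind)\<close>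
definition ctrl_field :: "pt4 \<Rightarrow> real \<times> real \<Rightarrow> pt4" where
  "ctrl_field = (\<lambda>(x,y,z,v) (u1,u2).
     (u1, u2, (x*u2 - y*u1)/2, -(z + x*y/6)*u1/2 + x^2*u2/12))"

definition adj_field :: "pt4 \<Rightarrow> real \<times> real \<Rightarrow> pt4 \<Rightarrow> pt4" where
  "adj_field = (\<lambda>(x,y,z,v) (u1,u2) (p1,p2,p3,p4).
     (p4*y*u1/12 - (p3/2 + p4*x/6)*u2, (p3/2 + p4*x/12)*u1, p4*u1/2, 0))"

definition hvec :: "pt4 \<Rightarrow> pt4 \<Rightarrow> real \<times> real" where
  "hvec = (\<lambda>(x,y,z,v) (p1,p2,p3,p4).
     (p1 - p3*y/2 - p4*x*y/12 - p4*z/2, p2 + p3*x/2 + p4*x^2/12))"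

text \<open>admissible curve on [0,T] with control u (u need not lie in U)\<close>
definition admissible :: "real \<Rightarrow> (real \<Rightarrow> pt4) \<Rightarrow> (real \<Rightarrow> real \<times> real) \<Rightarrow> bool" where
  "admissible T g u \<longleftrightarrow> 0 \<le> T \<and> u \<in> borel_measurable lborel \<and> abs_cont_on {0..T} g \<and>
     (AE t in lborel. t \<in> {0..T} \<longrightarrow>
        (g has_vector_derivative ctrl_field (g t) (u t)) (at t within {0..T}))"

definition sF_dist :: "(real \<times> real \<Rightarrow> real) \<Rightarrow> pt4 \<Rightarrow> pt4 \<Rightarrow> real" where
  "sF_dist F p q = Inf {integral {0..T} (\<lambda>t. F (u t)) | T g u.
      admissible T g u \<and> (\<lambda>t. F (u t)) absolutely_integrable_on {0..T} \<and> g 0 = p \<and> g T = q}"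

definition normal_ext :: "(real \<times> real \<Rightarrow> real) \<Rightarrow> (real \<Rightarrow> pt4) \<Rightarrow> (real \<Rightarrow> real \<times> real)
     \<Rightarrow> (real \<Rightarrow> pt4) \<Rightarrow> bool" where
  "normal_ext F g u \<psi> \<longleftrightarrow>
     g 0 = (0,0,0,0) \<and> u \<in> borel_measurable lborel \<and> (\<forall>t. F (u t) \<le> 1) \<and>
     (\<forall>a b. abs_cont_on {a..b} g) \<and>
     (AE t in lborel. (g has_vector_derivative ctrl_field (g t) (u t)) (at t)) \<and>
     (\<forall>a b. abs_cont_on {a..b} \<psi>) \<and> (\<forall>t. \<psi> t \<noteq> 0) \<and>
     (AE t in lborel. (\<psi> has_vector_derivative adj_field (g t) (u t) (\<psi> t)) (at t)) \<and>
     (AE t in lborel. fst (hvec (g t) (\<psi> t)) * fst (u t) + snd (hvec (g t) (\<psi> t)) * snd (u t)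
                        = FU F (hvec (g t) (\<psi> t)) \<and> FU F (hvec (g t) (\<psi> t)) = 1)"

text \<open>the trajectories of normal extremals with phi3 = phi4 = 0 and theta(0) = theta0\<close>
definition ext_data :: "(real \<times> real \<Rightarrow> real) \<Rightarrow> real \<Rightarrow> (real \<Rightarrow> pt4) set" where
  "ext_data F \<theta>0 = {g. \<exists>u \<psi>. normal_ext F g u \<psi> \<and>
      \<psi> 0 = (rpol F \<theta>0 * cos \<theta>0, rpol F \<theta>0 * sin \<theta>0, 0, 0)}"

end

theory Submission
  imports Defs
begin

lemma isn_nonneg: "is_norm F \<Longrightarrow> 0 \<le> F u" unfolding is_norm_def by blast
lemma isn_zero: "is_norm F \<Longrightarrow> F 0 = 0" unfolding is_norm_def by blast
lemma isn_zero_iff: "is_norm F \<Longrightarrow> F u = 0 \<longleftrightarrow> u = 0" unfolding is_norm_def by blast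
lemma isn_scale: "is_norm F \<Longrightarrow> F (c *\<^sub>R u) = \<bar>c\<bar> * F u" unfolding is_norm_def by blast
lemma isn_tri: "is_norm F \<Longrightarrow> F (u + w) \<le> F u + F w" unfolding is_norm_def by blast
lemma isn_minus: "is_norm F \<Longrightarrow> F (- u) = F u"
  using isn_scale[of F "-1" u] by simp
lemma isn_diff: "is_norm F \<Longrightarrow> \<bar>F u - F w\<bar> \<le> F (u - w)"
proof -
  assume n: "is_norm F"
  have "F u \<le> F (u - w) + F w" using isn_tri[OF n, of "u-w" w] by simp
  moreover have "F w \<le> F (w - u) + F u" using isn_tri[OF n, of "w-u" u] by simp
  moreover have "F (w - u) = F (u - w)" using isn_minus[OF n, of "u - w"] by simp
  ultimately show ?thesis by linarith
qed

lemma isn_upper: assumes n: "is_norm F"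
  shows "F u \<le> (F (1,0) + F (0,1)) * norm u"
proof -
  obtain a b where u: "u = (a,b)" by fastforce
  have "u = a *\<^sub>R (1,0) + b *\<^sub>R (0,1)" using u by simp
  then have "F u \<le> F (a *\<^sub>R (1,0)) + F (b *\<^sub>R (0,1))" using isn_tri[OF n] by metis
  also have "\<dots> = \<bar>a\<bar> * F (1,0) + \<bar>b\<bar> * F (0,1)" by (simp only: isn_scale[OF n])
  also have "\<dots> \<le> norm u * F (1,0) + norm u * F (0,1)"
  proof -
    have "\<bar>a\<bar> \<le> norm u" "\<bar>b\<bar> \<le> norm u" using u
      by (auto simp: norm_Pair intro: real_sqrt_ge_abs1 real_sqrt_ge_abs2)
    then show ?thesis using isn_nonneg[OF n, of "(1,0)"] isn_nonneg[OF n, of "(0,1)"]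
      by (intro add_mono mult_right_mono) auto
  qed
  finally show ?thesis by (simp add: algebra_simps)
qed

lemma isn_cont: assumes n: "is_norm F" shows "continuous_on UNIV F"
proof -
  define C where "C = F (1,0) + F (0,1) + 1"
  have C: "C > 0" using isn_nonneg[OF n, of "(1,0)"] isn_nonneg[OF n, of "(0,1)"] by (simp add: C_def)
  have L: "dist (F u) (F w) \<le> C * dist u w" for u w
  proof -
    have "dist (F u) (F w) \<le> F (u - w)" using isn_diff[OF n] by (simp add: dist_real_def)
    also have "\<dots> \<le> (F (1,0) + F (0,1)) * norm (u - w)" by (rule isn_upper[OF n])
    also have "\<dots> \<le> C * dist u w" by (simp add: C_def dist_norm mult_right_mono)
    finally show ?thesis .
  qed
  show ?thesis
    unfolding continuous_on_iff
  proof (intro ballI allI impI)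
    fix x and e::real assume "0 < e"
    then show "\<exists>d>0. \<forall>x'\<in>UNIV. dist x' x < d \<longrightarrow> dist (F x') (F x) < e"
    proof (intro exI[of _ "e / C"] conjI ballI impI)
      show "e / C > 0" using C \<open>0 < e\<close> by simp
      fix y assume "dist y x < e / C"
      then have "C * dist y x < e" using C by (simp add: field_simps)
      then show "dist (F y) (F x) < e" using L[of y x] by linarith
    qed
  qed
qed

lemma isn_lower: assumes n: "is_norm F" shows "\<exists>m>0. \<forall>u. m * norm u \<le> F u"
proof -
  have "compact (sphere (0::real\<times>real) 1)" by simp
  moreover have "sphere (0::real\<times>real) 1 \<noteq> {}"
  proof -
    have "((1::real),(0::real)) \<in> sphere 0 1" by (simp add: sphere_def norm_Pair)
    then show ?thesis by blast
  qed
  ultimately obtain u0 where u0: "u0 \<in> sphere 0 1" and m: "\<forall>y\<in>sphere 0 1. F u0 \<le> F y"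
  proof -
    have "continuous_on (sphere 0 1) F" using isn_cont[OF n] continuous_on_subset subset_UNIV by metis
    then show ?thesis using continuous_attains_inf[of "sphere 0 1" F] that \<open>compact (sphere 0 1)\<close> \<open>sphere 0 1 \<noteq> {}\<close> by metis
  qed
  have pos: "F u0 > 0" using u0 isn_zero_iff[OF n, of u0] isn_nonneg[OF n, of u0] by auto
  have "F u0 * norm u \<le> F u" for u
  proof (cases "u = 0")
    case True then show ?thesis by (simp add: isn_zero[OF n])
  next
    case False
    then have "(1 / norm u) *\<^sub>R u \<in> sphere 0 1" by simp
    then have "F u0 \<le> F ((1 / norm u) *\<^sub>R u)" using m by blast
    also have "\<dots> = F u / norm u" using isn_scale[OF n] by simp
    finally show ?thesis using False by (simp add: field_simps)
  qed
  then show ?thesis using pos by blast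
qed

lemma dot_inner: "fst h * fst u + snd h * snd u = inner h u"
  by (cases h, cases u) simp

lemma U_bounded: assumes n: "is_norm F" shows "\<exists>R>0. \<forall>u. F u \<le> 1 \<longrightarrow> norm u \<le> R"
proof -
  obtain m where m: "m > 0" "\<forall>u. m * norm u \<le> F u" using isn_lower[OF n] by blast
  have "norm u \<le> 1 / m" if "F u \<le> 1" for u
    using m(2)[rule_format, of u] that m(1) by (simp add: field_simps)
  then show ?thesis using m(1) by (intro exI[of _ "1/m"]) auto
qed

lemma U_compact: assumes n: "is_norm F" shows "compact {u. F u \<le> 1}"
unfolding compact_eq_bounded_closed proof
  show "bounded {u. F u \<le> 1}" using U_bounded[OF n] unfolding bounded_iff by blast
  show "closed {u. F u \<le> (1::real)}"
    using isn_cont[OF n] by (intro closed_Collect_le) auto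
qed

lemma FU_attain: assumes n: "is_norm F"
  shows "\<exists>u. F u \<le> 1 \<and> inner h u = FU F h \<and> (\<forall>w. F w \<le> 1 \<longrightarrow> inner h w \<le> inner h u)"
proof -
  have "(0::real\<times>real) \<in> {u. F u \<le> 1}" using isn_zero[OF n] by simp
  then have ne: "{u. F u \<le> 1} \<noteq> {}" by blast
  have "continuous_on {u. F u \<le> 1} (\<lambda>u. inner h u)" by (intro continuous_intros)
  then obtain u0 where u0: "u0 \<in> {u. F u \<le> 1}" "\<forall>w\<in>{u. F u \<le> 1}. inner h w \<le> inner h u0"
    using continuous_attains_sup[OF U_compact[OF n] ne] by blast
  have "FU F h = Sup ((\<lambda>u. inner h u) ` {u. F u \<le> 1})"
    unfolding FU_def dot_inner by simp
  also have "\<dots> = inner h u0"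
    using u0 by (intro cSup_eq_maximum) auto
  finally have "inner h u0 = FU F h" by simp
  moreover have "F u0 \<le> 1" "\<forall>w. F w \<le> 1 \<longrightarrow> inner h w \<le> inner h u0" using u0 by simp_all
  ultimately show ?thesis by blast
qed

lemma FU_ub: assumes n: "is_norm F" "F w \<le> 1" shows "inner h w \<le> FU F h"
proof -
  obtain u where "inner h u = FU F h" "\<forall>w. F w \<le> 1 \<longrightarrow> inner h w \<le> inner h u"
    using FU_attain[OF n(1), of h] by blast
  then show ?thesis using n(2) by metis
qed

lemma FU_le: assumes n: "is_norm F" shows "inner h w \<le> FU F h * F w"
proof (cases "w = 0")
  case True then show ?thesis by (simp add: isn_zero[OF n])
next
  case False
  then have Fp: "F w > 0" using isn_zero_iff[OF n, of w] isn_nonneg[OF n, of w] by auto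
  have "F ((1 / F w) *\<^sub>R w) = 1" using isn_scale[OF n, of "1 / F w" w] Fp by simp
  then have "inner h ((1 / F w) *\<^sub>R w) \<le> FU F h" by (intro FU_ub[OF n]) simp
  then have "inner h w / F w \<le> FU F h" by simp
  then show ?thesis using Fp by (simp add: pos_divide_le_eq)
qed

lemma FU_abs_le: assumes n: "is_norm F" shows "\<bar>inner h w\<bar> \<le> FU F h * F w"
  using FU_le[OF n, of h w] FU_le[OF n, of h "-w"] isn_minus[OF n, of w] by auto

lemma FU_pos: assumes n: "is_norm F" and h: "h \<noteq> 0" shows "FU F h > 0"
proof -
  have Fp: "F h > 0" using isn_zero_iff[OF n, of h] isn_nonneg[OF n, of h] h by auto
  have "inner h h \<le> FU F h * F h" by (rule FU_le[OF n])
  moreover have "inner h h > 0" using h by simp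
  ultimately have "0 < FU F h * F h" by linarith
  then show ?thesis using Fp by (simp add: zero_less_mult_iff)
qed

lemma FU_scale: assumes n: "is_norm F" and r: "0 \<le> r" shows "FU F (r *\<^sub>R h) = r * FU F h"
proof -
  obtain u where u: "F u \<le> 1" "inner h u = FU F h" "\<forall>w. F w \<le> 1 \<longrightarrow> inner h w \<le> inner h u"
    using FU_attain[OF n] by blast
  obtain v where v: "F v \<le> 1" "inner (r *\<^sub>R h) v = FU F (r *\<^sub>R h)"
    using FU_attain[OF n] by blast
  have "FU F (r *\<^sub>R h) \<ge> inner (r *\<^sub>R h) u" using FU_ub[OF n u(1)] by blast
  moreover have "inner (r *\<^sub>R h) v \<le> r * inner h u"
  proof -
    have "inner h v \<le> inner h u" using u(3) v(1) by blast
    then show ?thesis using r by (simp add: mult_left_mono)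
  qed
  ultimately show ?thesis using u(2) v(2) by simp
qed

lemma FU_zero: assumes n: "is_norm F" shows "FU F 0 = 0"
  using FU_scale[OF n, of 0 0] by simp

definition ev :: "real \<Rightarrow> real \<times> real" where "ev \<theta> = (cos \<theta>, sin \<theta>)"

lemma ev_norm: "norm (ev \<theta>) = 1" by (simp add: ev_def norm_Pair)
lemma ev_nz: "ev \<theta> \<noteq> 0" using ev_norm[of \<theta>] by auto

lemma rpol_eq: assumes n: "is_norm F"
  shows "rpol F \<theta> = 1 / FU F (ev \<theta>)" "rpol F \<theta> > 0" "FU F (rpol F \<theta> *\<^sub>R ev \<theta>) = 1"
proof -
  have N: "FU F (ev \<theta>) > 0" using FU_pos[OF n ev_nz] .
  have eq: "(\<rho> * cos \<theta>, \<rho> * sin \<theta>) = \<rho> *\<^sub>R ev \<theta>" for \<rho> by (simp add: ev_def)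
  have P: "0 < \<rho> \<and> FU F (\<rho> * cos \<theta>, \<rho> * sin \<theta>) = 1 \<longleftrightarrow> \<rho> = 1 / FU F (ev \<theta>)" for \<rho>
  proof (cases "\<rho> > 0")
    case True
    have "FU F (\<rho> *\<^sub>R ev \<theta>) = \<rho> * FU F (ev \<theta>)" using FU_scale[OF n, of \<rho> "ev \<theta>"] True by simp
    then show ?thesis unfolding eq using N True by (simp add: eq_divide_eq)
  next
    case False
    then have "\<rho> * FU F (ev \<theta>) \<le> 0" using N by (simp add: mult_nonpos_nonneg)
    then show ?thesis using N False by (auto simp: field_simps)
  qed
  show r: "rpol F \<theta> = 1 / FU F (ev \<theta>)" unfolding rpol_def P by simp
  show "rpol F \<theta> > 0" using r N by simp
  show "FU F (rpol F \<theta> *\<^sub>R ev \<theta>) = 1" using r N FU_scale[OF n, of "rpol F \<theta>" "ev \<theta>"] by simp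
qed

lemma acD: "abs_cont_on S f \<Longrightarrow> e > 0 \<Longrightarrow> \<exists>d>0. \<forall>(n::nat) a b.
     (\<forall>i<n. a i \<le> b i \<and> {a i..b i} \<subseteq> S) \<and> disjoint_family_on (\<lambda>i. {a i<..<b i}) {..<n} \<and>
     (\<Sum>i<n. b i - a i) < d \<longrightarrow> (\<Sum>i<n. norm (f (b i) - f (a i))) < e"
  unfolding abs_cont_on_def by blast

lemma acI: "(\<And>e. e > 0 \<Longrightarrow> \<exists>d>0. \<forall>(n::nat) a b.
     (\<forall>i<n. a i \<le> b i \<and> {a i..b i} \<subseteq> S) \<and> disjoint_family_on (\<lambda>i. {a i<..<b i}) {..<n} \<and>
     (\<Sum>i<n. b i - a i) < d \<longrightarrow> (\<Sum>i<n. norm (f (b i) - f (a i))) < e) \<Longrightarrow> abs_cont_on S f"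
  unfolding abs_cont_on_def by blast

lemma ac_two_points:
  assumes "abs_cont_on S f" "e > 0"
  shows "\<exists>d>0. \<forall>x y. x \<le> y \<and> {x..y} \<subseteq> S \<and> y - x < d \<longrightarrow> norm (f y - f x) < e"
proof -
  obtain d where d: "d > 0" and D: "\<forall>(n::nat) a b.
     (\<forall>i<n. a i \<le> b i \<and> {a i..b i} \<subseteq> S) \<and> disjoint_family_on (\<lambda>i. {a i<..<b i}) {..<n} \<and>
     (\<Sum>i<n. b i - a i) < d \<longrightarrow> (\<Sum>i<n. norm (f (b i) - f (a i))) < e"
    using acD[OF assms] by blast
  have "norm (f y - f x) < e" if "x \<le> y" "{x..y} \<subseteq> S" "y - x < d" for x y
    using D[rule_format, of 1 "\<lambda>_. x" "\<lambda>_. y"] that by (simp add: disjoint_family_on_def)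
  then show ?thesis using d by blast
qed

lemma ac_cont: assumes "abs_cont_on {c..d} f" shows "continuous_on {c..d} f"
  unfolding continuous_on_iff
proof (intro ballI allI impI)
  fix x e assume x: "x \<in> {c..d}" and e: "(0::real) < e"
  obtain r where r: "r > 0" "\<forall>x y. x \<le> y \<and> {x..y} \<subseteq> {c..d} \<and> y - x < r \<longrightarrow> norm (f y - f x) < e"
    using ac_two_points[OF assms e] by blast
  show "\<exists>d'>0. \<forall>x'\<in>{c..d}. dist x' x < d' \<longrightarrow> dist (f x') (f x) < e"
  proof (intro exI[of _ r] conjI ballI impI)
    fix y assume y: "y \<in> {c..d}" "dist y x < r"
    show "dist (f y) (f x) < e"
    proof (cases "x \<le> y")
      case True
      then show ?thesis using r(2)[rule_format, of x y] x y by (auto simp: dist_norm dist_real_def)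
    next
      case False
      then show ?thesis using r(2)[rule_format, of y x] x y by (auto simp: dist_norm dist_real_def norm_minus_commute)
    qed
  qed (use r in auto)
qed

lemma ac_add: assumes "abs_cont_on S f" "abs_cont_on S g" shows "abs_cont_on S (\<lambda>t. f t + g t)"
proof (rule acI)
  fix e :: real assume e: "e > 0"
  obtain d1 where d1: "d1 > 0" "\<forall>(n::nat) a b.
     (\<forall>i<n. a i \<le> b i \<and> {a i..b i} \<subseteq> S) \<and> disjoint_family_on (\<lambda>i. {a i<..<b i}) {..<n} \<and>
     (\<Sum>i<n. b i - a i) < d1 \<longrightarrow> (\<Sum>i<n. norm (f (b i) - f (a i))) < e/2"
    using acD[OF assms(1), of "e/2"] e by auto
  obtain d2 where d2: "d2 > 0" "\<forall>(n::nat) a b.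
     (\<forall>i<n. a i \<le> b i \<and> {a i..b i} \<subseteq> S) \<and> disjoint_family_on (\<lambda>i. {a i<..<b i}) {..<n} \<and>
     (\<Sum>i<n. b i - a i) < d2 \<longrightarrow> (\<Sum>i<n. norm (g (b i) - g (a i))) < e/2"
    using acD[OF assms(2), of "e/2"] e by auto
  show "\<exists>d>0. \<forall>(n::nat) a b.
     (\<forall>i<n. a i \<le> b i \<and> {a i..b i} \<subseteq> S) \<and> disjoint_family_on (\<lambda>i. {a i<..<b i}) {..<n} \<and>
     (\<Sum>i<n. b i - a i) < d \<longrightarrow> (\<Sum>i<n. norm (f (b i) + g (b i) - (f (a i) + g (a i)))) < e"
  proof (intro exI[of _ "min d1 d2"] conjI allI impI)
    fix n :: nat and a b :: "nat \<Rightarrow> real"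
    assume H: "(\<forall>i<n. a i \<le> b i \<and> {a i..b i} \<subseteq> S) \<and> disjoint_family_on (\<lambda>i. {a i<..<b i}) {..<n} \<and>
     (\<Sum>i<n. b i - a i) < min d1 d2"
    have "(\<Sum>i<n. norm (f (b i) + g (b i) - (f (a i) + g (a i))))
        \<le> (\<Sum>i<n. norm (f (b i) - f (a i)) + norm (g (b i) - g (a i)))"
      by (intro sum_mono) (metis add_diff_add norm_triangle_ineq)
    also have "\<dots> = (\<Sum>i<n. norm (f (b i) - f (a i))) + (\<Sum>i<n. norm (g (b i) - g (a i)))"
      by (simp add: sum.distrib)
    also have "\<dots> < e/2 + e/2"
      using d1(2)[rule_format, of n a b] d2(2)[rule_format, of n a b] H by (intro add_strict_mono) auto
    finally show "(\<Sum>i<n. norm (f (b i) + g (b i) - (f (a i) + g (a i)))) < e" by simp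
  qed (use d1 d2 in auto)
qed

lemma ac_lip: assumes "abs_cont_on S f" "\<And>x y. norm (h x - h y) \<le> K * norm (x - y)"
  shows "abs_cont_on S (\<lambda>t. h (f t))"
proof (rule acI)
  fix e :: real assume e: "e > 0"
  define K' where "K' = max K 1"
  have K': "K' > 0" "K \<le> K'" by (auto simp: K'_def)
  obtain d1 where d1: "d1 > 0" "\<forall>(n::nat) a b.
     (\<forall>i<n. a i \<le> b i \<and> {a i..b i} \<subseteq> S) \<and> disjoint_family_on (\<lambda>i. {a i<..<b i}) {..<n} \<and>
     (\<Sum>i<n. b i - a i) < d1 \<longrightarrow> (\<Sum>i<n. norm (f (b i) - f (a i))) < e/K'"
    using acD[OF assms(1), of "e/K'"] e K' by auto
  show "\<exists>d>0. \<forall>(n::nat) a b.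
     (\<forall>i<n. a i \<le> b i \<and> {a i..b i} \<subseteq> S) \<and> disjoint_family_on (\<lambda>i. {a i<..<b i}) {..<n} \<and>
     (\<Sum>i<n. b i - a i) < d \<longrightarrow> (\<Sum>i<n. norm (h (f (b i)) - h (f (a i)))) < e"
  proof (intro exI[of _ d1] conjI allI impI)
    fix n :: nat and a b :: "nat \<Rightarrow> real"
    assume H: "(\<forall>i<n. a i \<le> b i \<and> {a i..b i} \<subseteq> S) \<and> disjoint_family_on (\<lambda>i. {a i<..<b i}) {..<n} \<and>
     (\<Sum>i<n. b i - a i) < d1"
    have "(\<Sum>i<n. norm (h (f (b i)) - h (f (a i)))) \<le> (\<Sum>i<n. K' * norm (f (b i) - f (a i)))"
    proof (intro sum_mono)
      fix i show "norm (h (f (b i)) - h (f (a i))) \<le> K' * norm (f (b i) - f (a i))"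
      proof -
        have "K * norm (f (b i) - f (a i)) \<le> K' * norm (f (b i) - f (a i))"
          using K' by (intro mult_right_mono) auto
        then show ?thesis using assms(2)[of "f (b i)" "f (a i)"] by linarith
      qed
    qed
    also have "\<dots> = K' * (\<Sum>i<n. norm (f (b i) - f (a i)))" by (simp add: sum_distrib_left)
    also have "\<dots> < K' * (e / K')" using d1(2)[rule_format, of n a b] H K' by (intro mult_strict_left_mono) auto
    finally show "(\<Sum>i<n. norm (h (f (b i)) - h (f (a i)))) < e" using K' by simp
  qed (use d1 in auto)
qed

lemma ac_scale: assumes "abs_cont_on S f" shows "abs_cont_on S (\<lambda>t. c *\<^sub>R f t)"
  using ac_lip[OF assms, of "\<lambda>x. c *\<^sub>R x" "\<bar>c\<bar>"] by (simp add: scaleR_diff_right[symmetric])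

lemma ac_minus: assumes "abs_cont_on S f" shows "abs_cont_on S (\<lambda>t. - f t)"
  using ac_scale[OF assms, of "-1"] by simp

lemma ac_diff: assumes "abs_cont_on S f" "abs_cont_on S g" shows "abs_cont_on S (\<lambda>t. f t - g t)"
  using ac_add[OF assms(1) ac_minus[OF assms(2)]] by simp

lemma ac_id: "abs_cont_on S (\<lambda>t::real. t)"
proof (rule acI)
  fix e :: real assume e: "e > 0"
  show "\<exists>d>0. \<forall>(n::nat) a b.
     (\<forall>i<n. a i \<le> b i \<and> {a i..b i} \<subseteq> S) \<and> disjoint_family_on (\<lambda>i. {a i<..<b i}) {..<n} \<and>
     (\<Sum>i<n. b i - a i) < d \<longrightarrow> (\<Sum>i<n. norm (b i - a i)) < e"
  proof (intro exI[of _ e] conjI allI impI)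
    fix n :: nat and a b :: "nat \<Rightarrow> real"
    assume H: "(\<forall>i<n. a i \<le> b i \<and> {a i..b i} \<subseteq> S) \<and> disjoint_family_on (\<lambda>i. {a i<..<b i}) {..<n} \<and>
     (\<Sum>i<n. b i - a i) < e"
    have "(\<Sum>i<n. norm (b i - a i)) = (\<Sum>i<n. b i - a i)" using H by (intro sum.cong) auto
    then show "(\<Sum>i<n. norm (b i - a i)) < e" using H by simp
  qed (use e in auto)
qed

lemma ac_const: "abs_cont_on S (\<lambda>t. k)"
proof (rule acI)
  fix e :: real assume "e > 0"
  then show "\<exists>d>0. \<forall>(n::nat) a b.
     (\<forall>i<n. a i \<le> b i \<and> {a i..b i} \<subseteq> S) \<and> disjoint_family_on (\<lambda>i. {a i<..<b i}) {..<n} \<and>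
     (\<Sum>i<n. b i - a i) < d \<longrightarrow> (\<Sum>i<n. norm (k - k)) < e" by (intro exI[of _ 1]) simp
qed

lemma ac_lin: "abs_cont_on S (\<lambda>t::real. p * t + q)"
  using ac_add[OF ac_scale[OF ac_id, where c=p] ac_const[where k=q]] by simp

lemma nfst: "norm (fst x - fst y) \<le> 1 * norm (x - y)"
proof -
  have "norm (fst (x - y)) \<le> norm (x - y)" using norm_fst_le[of "fst (x - y)" "snd (x - y)"] by (simp only: prod.collapse)
  then show ?thesis by simp
qed
lemma nsnd: "norm (snd x - snd y) \<le> 1 * norm (x - y)"
proof -
  have "norm (snd (x - y)) \<le> norm (x - y)" using norm_snd_le[of "snd (x - y)" "fst (x - y)"] by (simp only: prod.collapse)
  then show ?thesis by simp
qed
lemma ac_fst: "abs_cont_on S f \<Longrightarrow> abs_cont_on S (\<lambda>t. fst (f t))"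
  using ac_lip[of S f fst 1] nfst by blast
lemma ac_snd: "abs_cont_on S f \<Longrightarrow> abs_cont_on S (\<lambda>t. snd (f t))"
  using ac_lip[of S f snd 1] nsnd by blast
lemma ac_subset: assumes "abs_cont_on S f" "T \<subseteq> S" shows "abs_cont_on T f"
proof (rule acI)
  fix e :: real assume e: "e > 0"
  obtain d where d: "d > 0" "\<forall>(n::nat) a b.
     (\<forall>i<n. a i \<le> b i \<and> {a i..b i} \<subseteq> S) \<and> disjoint_family_on (\<lambda>i. {a i<..<b i}) {..<n} \<and>
     (\<Sum>i<n. b i - a i) < d \<longrightarrow> (\<Sum>i<n. norm (f (b i) - f (a i))) < e"
    using acD[OF assms(1) e] by blast
  show "\<exists>d>0. \<forall>(n::nat) a b.
     (\<forall>i<n. a i \<le> b i \<and> {a i..b i} \<subseteq> T) \<and> disjoint_family_on (\<lambda>i. {a i<..<b i}) {..<n} \<and>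
     (\<Sum>i<n. b i - a i) < d \<longrightarrow> (\<Sum>i<n. norm (f (b i) - f (a i))) < e"
    using d assms(2) by (meson order_trans)
qed

lemma ac_family:
  fixes \<alpha> \<beta> :: "'k \<Rightarrow> real" and d e :: real
  assumes D: "\<forall>(n::nat) a b.
     (\<forall>i<n. a i \<le> b i \<and> {a i..b i} \<subseteq> S) \<and> disjoint_family_on (\<lambda>i. {a i<..<b i}) {..<n} \<and>
     (\<Sum>i<n. b i - a i) < d \<longrightarrow> (\<Sum>i<n. norm (f (b i) - f (a i))) < e"
    and fin: "finite E" and ab: "\<forall>K\<in>E. \<alpha> K \<le> \<beta> K \<and> {\<alpha> K..\<beta> K} \<subseteq> S"
    and dj: "disjoint_family_on (\<lambda>K. {\<alpha> K<..<\<beta> K}) E"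
    and len: "(\<Sum>K\<in>E. \<beta> K - \<alpha> K) < d"
  shows "(\<Sum>K\<in>E. norm (f (\<beta> K) - f (\<alpha> K))) < e"
proof -
  obtain h where h: "bij_betw h {0..<card E} E" using ex_bij_betw_nat_finite[OF fin] by blast
  have lt: "{..<card E} = {0..<card E}" by auto
  have eq1: "(\<Sum>K\<in>E. g K) = (\<Sum>i<card E. g (h i))" for g :: "_ \<Rightarrow> real"
    using sum.reindex_bij_betw[OF h, of g] lt by simp
  have inj: "inj_on h {..<card E}" and img: "h ` {..<card E} = E" using h lt by (auto simp: bij_betw_def)
  have "(\<Sum>i<card E. norm (f (\<beta> (h i)) - f (\<alpha> (h i)))) < e"
  proof (rule D[rule_format])
    show "(\<forall>i<card E. \<alpha> (h i) \<le> \<beta> (h i) \<and> {\<alpha> (h i)..\<beta> (h i)} \<subseteq> S) \<and>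
        disjoint_family_on (\<lambda>i. {\<alpha> (h i)<..<\<beta> (h i)}) {..<card E} \<and>
        (\<Sum>i<card E. \<beta> (h i) - \<alpha> (h i)) < d"
    proof (intro conjI allI impI)
      fix i assume "i < card E"
      then have "h i \<in> E" using img by blast
      then show "\<alpha> (h i) \<le> \<beta> (h i)" "{\<alpha> (h i)..\<beta> (h i)} \<subseteq> S" using ab by auto
    next
      show "disjoint_family_on (\<lambda>i. {\<alpha> (h i)<..<\<beta> (h i)}) {..<card E}"
        unfolding disjoint_family_on_def
      proof (intro ballI impI)
        fix i j assume ij: "i \<in> {..<card E}" "j \<in> {..<card E}" "i \<noteq> j"
        then have "h i \<noteq> h j" "h i \<in> E" "h j \<in> E" using inj img by (auto dest: inj_onD)
        then show "{\<alpha> (h i)<..<\<beta> (h i)} \<inter> {\<alpha> (h j)<..<\<beta> (h j)} = {}"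
          using dj unfolding disjoint_family_on_def by blast
      qed
    next
      show "(\<Sum>i<card E. \<beta> (h i) - \<alpha> (h i)) < d" using len eq1[of "\<lambda>K. \<beta> K - \<alpha> K"] by simp
    qed
  qed
  then show ?thesis using eq1[of "\<lambda>K. norm (f (\<beta> K) - f (\<alpha> K))"] by simp
qed

lemma lusin:
  fixes f :: "real \<Rightarrow> real"
  assumes ac: "abs_cont_on {c..d} f" and N: "negligible N" "N \<subseteq> {c..d}"
  shows "negligible (f ` N)"
  unfolding negligible_outer_le
proof (intro allI impI)
  fix e :: real assume e: "e > 0"
  have cont: "continuous_on {c..d} f" by (rule ac_cont[OF ac])
  obtain \<delta> where \<delta>: "\<delta> > 0" and D: "\<forall>(n::nat) a b.
     (\<forall>i<n. a i \<le> b i \<and> {a i..b i} \<subseteq> {c..d}) \<and> disjoint_family_on (\<lambda>i. {a i<..<b i}) {..<n} \<and>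
     (\<Sum>i<n. b i - a i) < \<delta> \<longrightarrow> (\<Sum>i<n. norm (f (b i) - f (a i))) < e"
    using acD[OF ac e] by blast
  have Nm: "N \<in> lmeasurable" "measure lebesgue N = 0"
    using N(1) by (auto simp: negligible_imp_measurable negligible_imp_measure0)
  have Nc: "N \<subseteq> cbox c d" using N(2) by simp
  obtain \<D> where cD: "countable \<D>"
    and DK: "\<And>K. K \<in> \<D> \<Longrightarrow> K \<subseteq> cbox c d \<and> K \<noteq> {} \<and> (\<exists>p q. K = cbox p q)"
    and pw: "pairwise (\<lambda>A B. interior A \<inter> interior B = {}) \<D>"
    and "\<And>u v. cbox u v \<in> \<D> \<Longrightarrow> \<exists>n. \<forall>i \<in> Basis. v \<bullet> i - u \<bullet> i = (d \<bullet> i - c \<bullet> i)/2^n"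
    and "\<And>K. \<lbrakk>K \<in> \<D>; box c d \<noteq> {}\<rbrakk> \<Longrightarrow> interior K \<noteq> {}"
    and NU: "N \<subseteq> \<Union>\<D>" and Um: "\<Union>\<D> \<in> lmeasurable" and Ule: "measure lebesgue (\<Union>\<D>) \<le> measure lebesgue N + \<delta>/2"
    by (rule measurable_outer_intervals_bounded[OF Nm(1) Nc, of "\<delta>/2"]) (use \<delta> in auto)
  have ex: "\<exists>s1 s2. s1 \<in> K \<and> s2 \<in> K \<and> (\<forall>x\<in>K. f s1 \<le> f x \<and> f x \<le> f s2)" if K: "K \<in> \<D>" for K
  proof -
    obtain p q where pq: "K = cbox p q" using DK[OF K] by blast
    have "compact K" "K \<noteq> {}" using pq DK[OF K] by auto
    moreover have "continuous_on K f" using cont DK[OF K] continuous_on_subset by (metis cbox_interval)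
    ultimately show ?thesis
      using continuous_attains_inf[of K f] continuous_attains_sup[of K f] by blast
  qed
  obtain S1 S2 where S: "\<And>K. K \<in> \<D> \<Longrightarrow> S1 K \<in> K \<and> S2 K \<in> K \<and> (\<forall>x\<in>K. f (S1 K) \<le> f x \<and> f x \<le> f (S2 K))"
    using ex by metis
  define I where "I K = {f (S1 K)..f (S2 K)}" for K
  define \<alpha> where "\<alpha> K = min (S1 K) (S2 K)" for K
  define \<beta> where "\<beta> K = max (S1 K) (S2 K)" for K
  have sub: "f ` N \<subseteq> (\<Union>K\<in>\<D>. I K)"
  proof
    fix y assume "y \<in> f ` N"
    then obtain x where x: "x \<in> N" "y = f x" by blast
    then obtain K where "K \<in> \<D>" "x \<in> K" using NU by blast
    then show "y \<in> (\<Union>K\<in>\<D>. I K)" using S x by (auto simp: I_def)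
  qed
  have Im: "I K \<in> fmeasurable lebesgue" for K by (simp add: I_def)
  have bound: "measure lebesgue (\<Union>K\<in>E. I K) \<le> e" if E: "E \<subseteq> \<D>" "finite E" for E
  proof -
    have "measure lebesgue (\<Union>K\<in>E. I K) \<le> (\<Sum>K\<in>E. measure lebesgue (I K))"
      by (rule measure_UNION_le) (use E Im in auto)
    also have "\<dots> = (\<Sum>K\<in>E. norm (f (\<beta> K) - f (\<alpha> K)))"
    proof (rule sum.cong)
      fix K assume "K \<in> E"
      then have K: "K \<in> \<D>" using E by blast
      have le: "f (S1 K) \<le> f (S2 K)" using S[OF K] by blast
      have "measure lebesgue (I K) = f (S2 K) - f (S1 K)" using le by (simp add: I_def)
      also have "\<dots> = norm (f (\<beta> K) - f (\<alpha> K))"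
        using le by (cases "S1 K \<le> S2 K") (auto simp: \<alpha>_def \<beta>_def)
      finally show "measure lebesgue (I K) = norm (f (\<beta> K) - f (\<alpha> K))" .
    qed simp
    also have "\<dots> < e"
    proof (rule ac_family[OF D E(2)])
      have sub1: "{\<alpha> K..\<beta> K} \<subseteq> K" if K: "K \<in> \<D>" for K
      proof -
        obtain p q where pq: "K = cbox p q" using DK[OF K] by blast
        then show ?thesis using S[OF K] by (auto simp: \<alpha>_def \<beta>_def)
      qed
      show "\<forall>K\<in>E. \<alpha> K \<le> \<beta> K \<and> {\<alpha> K..\<beta> K} \<subseteq> {c..d}"
        using sub1 DK E(1) by (force simp: \<alpha>_def \<beta>_def)
      have sub2: "{\<alpha> K<..<\<beta> K} \<subseteq> interior K" if K: "K \<in> \<D>" for K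
        using sub1[OF K] by (intro interior_maximal) auto
      show dj: "disjoint_family_on (\<lambda>K. {\<alpha> K<..<\<beta> K}) E"
        unfolding disjoint_family_on_def
      proof (intro ballI impI)
        fix K1 K2 assume "K1 \<in> E" "K2 \<in> E" "K1 \<noteq> K2"
        then have "interior K1 \<inter> interior K2 = {}" "K1 \<in> \<D>" "K2 \<in> \<D>" using pw E(1) by (auto simp: pairwise_def)
        then show "{\<alpha> K1<..<\<beta> K1} \<inter> {\<alpha> K2<..<\<beta> K2} = {}" using sub2 by blast
      qed
      have "(\<Sum>K\<in>E. \<beta> K - \<alpha> K) = (\<Sum>K\<in>E. measure lebesgue {\<alpha> K<..<\<beta> K})"
        by (intro sum.cong) (auto simp: \<alpha>_def \<beta>_def)
      also have "\<dots> = measure lebesgue (\<Union>K\<in>E. {\<alpha> K<..<\<beta> K})"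
        by (rule measure_finite_Union[symmetric]) (use E(2) dj in \<open>auto simp: \<alpha>_def \<beta>_def\<close>)
      also have "\<dots> \<le> measure lebesgue (\<Union>\<D>)"
      proof (rule measure_mono_fmeasurable)
        show "(\<Union>K\<in>E. {\<alpha> K<..<\<beta> K}) \<subseteq> \<Union>\<D>"
          using sub2 E(1) interior_subset by blast
        show "(\<Union>K\<in>E. {\<alpha> K<..<\<beta> K}) \<in> sets lebesgue"
          using E(2) by (intro sets.finite_UN) auto
      qed (use Um in auto)
      also have "\<dots> < \<delta>" using Ule Nm \<delta> by simp
      finally show "(\<Sum>K\<in>E. \<beta> K - \<alpha> K) < \<delta>" .
    qed
    finally show ?thesis by simp
  qed
  have "(\<Union>K\<in>\<D>. I K) \<in> fmeasurable lebesgue" "measure lebesgue (\<Union>K\<in>\<D>. I K) \<le> e"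
    using fmeasurable_UN_bound[OF cD, of I lebesgue e] measure_UN_bound[OF cD, of I lebesgue e] Im bound by auto
  then show "\<exists>T. f ` N \<subseteq> T \<and> T \<in> lmeasurable \<and> measure lebesgue T \<le> e"
    using sub by blast
qed

lemma ac_mono:
  fixes k :: "real \<Rightarrow> real"
  assumes ac: "abs_cont_on {c..d} k" and cd: "c \<le> d" and N: "negligible N"
    and der: "\<And>t e. t \<in> {c..<d} \<Longrightarrow> t \<notin> N \<Longrightarrow> e > 0 \<Longrightarrow>
        \<exists>\<delta>>0. \<forall>s. t < s \<and> s < t + \<delta> \<and> s \<le> d \<longrightarrow> k s \<le> k t + e * (s - t)"
  shows "k d \<le> k c"
proof (rule ccontr)
  assume "\<not> k d \<le> k c"
  then have gt: "k d > k c" by simp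
  have cd': "c < d" using gt cd by (cases "c = d") auto
  define \<epsilon> where "\<epsilon> = (k d - k c) / (2 * (d - c))"
  have \<epsilon>: "\<epsilon> > 0" using gt cd' by (simp add: \<epsilon>_def)
  define g where "g s = k s - (\<epsilon> * s + (- \<epsilon> * c))" for s
  have acg: "abs_cont_on {c..d} g"
    unfolding g_def by (rule ac_diff[OF ac ac_lin])
  have contg: "continuous_on {c..d} g" by (rule ac_cont[OF acg])
  have e1: "\<epsilon> * (d - c) = (k d - k c) / 2" using cd' by (simp add: \<epsilon>_def field_simps)
  have e2: "g d - g c = (k d - k c) - \<epsilon> * (d - c)" by (simp add: g_def algebra_simps)
  have gdc: "g d - g c = (k d - k c) / 2" unfolding e2 e1 by (simp add: field_simps)
  have neg: "negligible (g ` (N \<inter> {c..d}))"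
    by (rule lusin[OF acg]) (use N negligible_Int in auto)
  have nneg: "\<not> negligible {g c<..<g d}"
    using negligible_interval(2)[of "g c" "g d"] gdc gt by simp
  obtain y where y: "y \<in> {g c<..<g d}" "y \<notin> g ` (N \<inter> {c..d})"
    using neg nneg negligible_subset[of "g ` (N \<inter> {c..d})" "{g c<..<g d}"] by blast
  define S where "S = {s \<in> {c..d}. g s \<le> y}"
  have clS: "closed S" unfolding S_def
    by (rule continuous_on_closed_Collect_le[OF contg continuous_on_const closed_atLeastAtMost])
  have cS: "c \<in> S" using y cd by (simp add: S_def)
  have bS: "bdd_above S" unfolding S_def by (rule bdd_aboveI[of _ d]) auto
  define t where "t = Sup S"
  have tS: "t \<in> S" unfolding t_def using closed_contains_Sup[OF _ bS clS] cS by blast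
  have le_t: "\<And>s. s \<in> S \<Longrightarrow> s \<le> t" unfolding t_def using bS by (rule cSup_upper[rotated])
  have t_cd: "c \<le> t" "t \<le> d" "g t \<le> y" using tS by (auto simp: S_def)
  have "t \<noteq> d" using t_cd y by auto
  then have td: "t < d" using t_cd by simp
  obtain x where x: "t \<le> x" "x \<le> d" "g x = y"
    using IVT'[of g t y d] t_cd y td continuous_on_subset[OF contg, of "{t..d}"] by force
  have "x \<in> S" using x t_cd by (simp add: S_def)
  then have "x = t" using le_t x by force
  then have gty: "g t = y" using x by simp
  have tN: "t \<notin> N" using y gty t_cd by force
  obtain \<delta> where \<delta>: "\<delta> > 0" "\<forall>s. t < s \<and> s < t + \<delta> \<and> s \<le> d \<longrightarrow> k s \<le> k t + \<epsilon> * (s - t)"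
    using der[of t \<epsilon>] t_cd td tN \<epsilon> by auto
  define s where "s = min (t + \<delta>/2) d"
  have s: "t < s" "s < t + \<delta>" "s \<le> d" using \<delta> td by (auto simp: s_def)
  then have "k s \<le> k t + \<epsilon> * (s - t)" using \<delta> by blast
  then have "g s \<le> g t" by (simp add: g_def algebra_simps)
  then have "s \<in> S" using s t_cd gty by (simp add: S_def)
  then show False using le_t s by force
qed

lemma ae_negl: assumes "AE t in lborel. P t" shows "\<exists>N. negligible N \<and> (\<forall>t. t \<notin> N \<longrightarrow> P t)"
proof -
  obtain N where N: "\<And>x. x \<in> space lborel - N \<Longrightarrow> P x" "N \<in> null_sets lborel"
    using AE_E3[OF assms] by blast
  have "negligible N" unfolding negligible_iff_null_sets using N(2) by (rule null_sets_completionI)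
  then show ?thesis using N(1) by auto
qed

lemma sum_int_disjoint:
  fixes \<psi> :: "real \<Rightarrow> real" and n :: nat
  assumes int: "\<psi> integrable_on {c..d}" and nn: "\<And>x. x \<in> {c..d} \<Longrightarrow> 0 \<le> \<psi> x"
    and ab: "\<forall>i<n. a i \<le> b i \<and> {a i..b i} \<subseteq> {c..d}"
    and dj: "disjoint_family_on (\<lambda>i. {a i<..<b i}) {..<n}"
  shows "(\<Sum>i<n. integral {a i..b i} \<psi>) \<le> integral {c..d} \<psi>"
proof -
  define h where "h i x = (if x \<in> {a i<..<b i} then \<psi> x else 0)" for i x
  have sub: "{a i<..<b i} \<inter> {c..d} = {a i<..<b i}" if "i < n" for i using ab that by auto
  have hi: "integral {c..d} (h i) = integral {a i..b i} \<psi>" if "i < n" for i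
  proof -
    have "integral {c..d} (h i) = integral ({a i<..<b i} \<inter> {c..d}) \<psi>" unfolding h_def by (rule integral_restrict_Int)
    also have "\<dots> = integral {a i<..<b i} \<psi>" using sub[OF that] by simp
    also have "\<dots> = integral {a i..b i} \<psi>" by (rule integral_open_interval_real[symmetric])
    finally show ?thesis .
  qed
  have hint: "h i integrable_on {c..d}" if "i < n" for i
    unfolding h_def integrable_restrict_Int sub[OF that] integrable_on_open_interval_real
    using integrable_on_subinterval[OF int] ab that by blast
  have "(\<Sum>i<n. integral {a i..b i} \<psi>) = (\<Sum>i<n. integral {c..d} (h i))" using hi by simp
  also have "\<dots> = integral {c..d} (\<lambda>x. \<Sum>i<n. h i x)"
    by (rule integral_sum[symmetric]) (use hint in auto)
  also have "\<dots> \<le> integral {c..d} \<psi>"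
  proof (rule integral_le)
    show "(\<lambda>x. \<Sum>i<n. h i x) integrable_on {c..d}" by (rule integrable_sum) (use hint in auto)
    show "\<psi> integrable_on {c..d}" by (rule int)
    fix x assume x: "x \<in> {c..d}"
    show "(\<Sum>i<n. h i x) \<le> \<psi> x"
    proof (cases "\<exists>i<n. x \<in> {a i<..<b i}")
      case False
      then have "(\<Sum>i<n. h i x) = 0" by (intro sum.neutral) (auto simp: h_def)
      then show ?thesis using nn[OF x] by simp
    next
      case True
      then obtain i0 where i0: "i0 < n" "x \<in> {a i0<..<b i0}" by blast
      have z: "h i x = 0" if "i \<in> {..<n} - {i0}" for i
      proof -
        have "{a i<..<b i} \<inter> {a i0<..<b i0} = {}" using dj that i0 unfolding disjoint_family_on_def by auto
        then show ?thesis using i0 by (auto simp: h_def)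
      qed
      have "(\<Sum>i<n. h i x) = h i0 x + (\<Sum>i\<in>{..<n} - {i0}. h i x)"
        by (rule sum.remove) (use i0 in auto)
      also have "\<dots> = \<psi> x" using z i0 by (simp add: h_def)
      finally show ?thesis by simp
    qed
  qed
  finally show ?thesis .
qed

lemma ac_integral:
  fixes \<phi> :: "real \<Rightarrow> real"
  assumes int: "\<phi> integrable_on {c..d}" and nn: "\<And>t. t \<in> {c..d} \<Longrightarrow> 0 \<le> \<phi> t"
  shows "abs_cont_on {c..d} (\<lambda>t. integral {c..t} \<phi>)"
proof (rule acI)
  fix e :: real assume e: "e > 0"
  define \<phi>k where "\<phi>k k t = min (\<phi> t) (real k)" for k :: nat and t
  have aint: "\<phi> absolutely_integrable_on {c..d}" by (rule nonnegative_absolutely_integrable_1[OF int nn])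
  have kint: "\<phi>k k integrable_on {c..d}" for k
  proof -
    have "(\<lambda>t. real k) absolutely_integrable_on {c..d}" by (rule absolutely_integrable_on_const) simp
    then have "\<phi>k k absolutely_integrable_on {c..d}" unfolding \<phi>k_def
      by (rule absolutely_integrable_min_1[OF aint])
    then show ?thesis by (simp add: absolutely_integrable_on_def)
  qed
  have mc: "\<phi> integrable_on {c..d} \<and> ((\<lambda>k. integral {c..d} (\<phi>k k)) \<longlongrightarrow> integral {c..d} \<phi>) sequentially"
  proof (rule monotone_convergence_increasing[OF kint])
    show "\<phi>k k x \<le> \<phi>k (Suc k) x" for k x by (auto simp: \<phi>k_def)
    show "((\<lambda>k. \<phi>k k x) \<longlongrightarrow> \<phi> x) sequentially" for x
    proof (rule tendsto_eventually)
      obtain K :: nat where "\<phi> x \<le> real K" using real_arch_simple by blast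
      then show "\<forall>\<^sub>F k in sequentially. \<phi>k k x = \<phi> x"
        unfolding eventually_sequentially by (intro exI[of _ K]) (auto simp: \<phi>k_def)
    qed
    have "\<bar>integral {c..d} (\<phi>k k)\<bar> \<le> integral {c..d} \<phi>" for k
    proof -
      have "0 \<le> integral {c..d} (\<phi>k k)" by (rule integral_nonneg[OF kint]) (auto simp: \<phi>k_def nn)
      moreover have "integral {c..d} (\<phi>k k) \<le> integral {c..d} \<phi>"
        by (rule integral_le[OF kint int]) (auto simp: \<phi>k_def)
      ultimately show ?thesis by simp
    qed
    then show "bounded (range (\<lambda>k. integral {c..d} (\<phi>k k)))"
      unfolding bounded_iff by (auto intro!: exI[of _ "integral {c..d} \<phi>"])
  qed
  then obtain K where K: "\<bar>integral {c..d} (\<phi>k K) - integral {c..d} \<phi>\<bar> < e/2"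
    using e unfolding LIMSEQ_def dist_real_def by (metis half_gt_zero order_refl)
  define \<psi> where "\<psi> t = \<phi> t - \<phi>k K t" for t
  have \<psi>int: "\<psi> integrable_on {c..d}" unfolding \<psi>_def by (rule integrable_diff[OF int kint])
  have \<psi>nn: "0 \<le> \<psi> t" for t by (auto simp: \<psi>_def \<phi>k_def)
  have "integral {c..d} \<psi> = integral {c..d} \<phi> - integral {c..d} (\<phi>k K)"
    unfolding \<psi>_def by (rule integral_diff[OF int kint])
  then have \<psi>small: "integral {c..d} \<psi> < e/2" using K by linarith
  define \<delta> where "\<delta> = e / (2 * (real K + 1))"
  have \<delta>: "\<delta> > 0" using e by (simp add: \<delta>_def)
  show "\<exists>d'>0. \<forall>(n::nat) a b.
     (\<forall>i<n. a i \<le> b i \<and> {a i..b i} \<subseteq> {c..d}) \<and> disjoint_family_on (\<lambda>i. {a i<..<b i}) {..<n} \<and>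
     (\<Sum>i<n. b i - a i) < d' \<longrightarrow> (\<Sum>i<n. norm (integral {c..b i} \<phi> - integral {c..a i} \<phi>)) < e"
  proof (intro exI[of _ \<delta>] conjI allI impI)
    fix n :: nat and a b :: "nat \<Rightarrow> real"
    assume H: "(\<forall>i<n. a i \<le> b i \<and> {a i..b i} \<subseteq> {c..d}) \<and> disjoint_family_on (\<lambda>i. {a i<..<b i}) {..<n} \<and>
     (\<Sum>i<n. b i - a i) < \<delta>"
    have ab: "\<forall>i<n. a i \<le> b i \<and> {a i..b i} \<subseteq> {c..d}" using H by blast
    have step: "norm (integral {c..b i} \<phi> - integral {c..a i} \<phi>) \<le> real K * (b i - a i) + integral {a i..b i} \<psi>"
      if i: "i < n" for i
    proof -
      have ai: "c \<le> a i" "a i \<le> b i" "b i \<le> d" using ab i by auto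
      have comb: "integral {c..a i} \<phi> + integral {a i..b i} \<phi> = integral {c..b i} \<phi>"
        by (rule Henstock_Kurzweil_Integration.integral_combine) (use ai integrable_on_subinterval[OF int, of c "b i"] in auto)
      have intab: "\<phi> integrable_on {a i..b i}" "\<phi>k K integrable_on {a i..b i}"
        using integrable_on_subinterval[OF int, of "a i" "b i"] integrable_on_subinterval[OF kint, of "a i" "b i"] ai by auto
      have nn2: "0 \<le> integral {a i..b i} \<phi>" by (rule integral_nonneg[OF intab(1)]) (use ai nn in auto)
      have "integral {a i..b i} \<psi> = integral {a i..b i} \<phi> - integral {a i..b i} (\<phi>k K)"
        unfolding \<psi>_def by (rule integral_diff[OF intab(1) intab(2)])
      then have "integral {a i..b i} \<phi> = integral {a i..b i} (\<phi>k K) + integral {a i..b i} \<psi>" by simp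
      moreover have "integral {a i..b i} (\<phi>k K) \<le> integral {a i..b i} (\<lambda>t. real K)"
        by (rule integral_le[OF intab(2)]) (auto simp: \<phi>k_def)
      moreover have "integral {a i..b i} (\<lambda>t. real K) = real K * (b i - a i)" using ai by simp
      ultimately show ?thesis using comb nn2 by (simp add: algebra_simps)
    qed
    have "(\<Sum>i<n. norm (integral {c..b i} \<phi> - integral {c..a i} \<phi>))
        \<le> (\<Sum>i<n. real K * (b i - a i) + integral {a i..b i} \<psi>)" by (rule sum_mono) (use step in auto)
    also have "\<dots> = real K * (\<Sum>i<n. b i - a i) + (\<Sum>i<n. integral {a i..b i} \<psi>)"
      by (simp add: sum.distrib sum_distrib_left)
    also have "\<dots> \<le> real K * \<delta> + integral {c..d} \<psi>"
    proof (rule add_mono)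
      show "real K * (\<Sum>i<n. b i - a i) \<le> real K * \<delta>" using H by (intro mult_left_mono) auto
      show "(\<Sum>i<n. integral {a i..b i} \<psi>) \<le> integral {c..d} \<psi>"
        by (rule sum_int_disjoint[OF \<psi>int]) (use \<psi>nn H in auto)
    qed
    also have "\<dots> < e/2 + e/2"
    proof (rule add_le_less_mono)
      have "real K * \<delta> = e/2 * (real K / (real K + 1))" by (simp add: \<delta>_def field_simps)
      also have "\<dots> \<le> e/2 * 1" using e by (intro mult_left_mono) auto
      finally show "real K * \<delta> \<le> e/2" by simp
    qed (rule \<psi>small)
    finally show "(\<Sum>i<n. norm (integral {c..b i} \<phi> - integral {c..a i} \<phi>)) < e" by simp
  qed (rule \<delta>)
qed

lemma right_deriv_integral:
  fixes \<phi> :: "real \<Rightarrow> real"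
  assumes int: "\<phi> integrable_on {c..d}"
  shows "\<exists>N. negligible N \<and> (\<forall>t e. t \<in> {c..<d} \<and> t \<notin> N \<and> e > 0 \<longrightarrow>
      (\<exists>\<delta>>0. \<forall>h. 0 < h \<and> h < \<delta> \<and> t + h \<le> d \<longrightarrow> \<bar>integral {t..t+h} \<phi> - h * \<phi> t\<bar> \<le> e * h))"
proof -
  define \<phi>' where "\<phi>' x = (if x \<in> {c..d} then \<phi> x else 0)" for x
  have U: "\<phi>' integrable_on UNIV" unfolding \<phi>'_def by (rule integrable_restrict_UNIV[THEN iffD2, OF int])
  have cb: "\<And>a b. \<phi>' integrable_on cbox a b" by (rule integrable_on_subcbox[OF U]) simp
  obtain N where N: "negligible N"
    "\<And>x e. \<lbrakk>x \<notin> N; 0 < e\<rbrakk> \<Longrightarrow> \<exists>d>0. \<forall>h. 0 < h \<and> h < d \<longrightarrow>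
        norm(integral (cbox x (x + h *\<^sub>R One)) \<phi>' /\<^sub>R h ^ DIM(real) - \<phi>' x) < e"
    using integrable_ccontinuous_explicit[OF cb] by blast
  have "\<exists>\<delta>>0. \<forall>h. 0 < h \<and> h < \<delta> \<and> t + h \<le> d \<longrightarrow> \<bar>integral {t..t+h} \<phi> - h * \<phi> t\<bar> \<le> e * h"
    if t: "t \<in> {c..<d}" "t \<notin> N" and e: "e > 0" for t e
  proof -
    obtain \<delta> where \<delta>: "\<delta> > 0" "\<forall>h. 0 < h \<and> h < \<delta> \<longrightarrow>
        norm(integral (cbox t (t + h *\<^sub>R One)) \<phi>' /\<^sub>R h ^ DIM(real) - \<phi>' t) < e"
      using N(2)[OF t(2) e] by blast
    show ?thesis
    proof (intro exI[of _ \<delta>] conjI allI impI)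
      fix h :: real assume h: "0 < h \<and> h < \<delta> \<and> t + h \<le> d"
      have sub: "{t..t+h} \<subseteq> {c..d}" using t h by auto
      have "integral {t..t+h} \<phi>' = integral ({c..d} \<inter> {t..t+h}) \<phi>"
        unfolding \<phi>'_def by (rule integral_restrict_Int)
      also have "{c..d} \<inter> {t..t+h} = {t..t+h}" using sub by blast
      finally have i1: "integral {t..t+h} \<phi>' = integral {t..t+h} \<phi>" .
      have p1: "\<phi>' t = \<phi> t" using t by (simp add: \<phi>'_def)
      have "\<bar>integral {t..t+h} \<phi> / h - \<phi> t\<bar> < e"
        using \<delta>(2)[rule_format, of h] h i1 p1 by (simp add: cbox_interval divide_inverse mult.commute)
      then have "\<bar>(integral {t..t+h} \<phi> - h * \<phi> t) / h\<bar> < e" using h by (simp add: diff_divide_distrib)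
      then have "\<bar>integral {t..t+h} \<phi> - h * \<phi> t\<bar> / h < e" using h by simp
      then show "\<bar>integral {t..t+h} \<phi> - h * \<phi> t\<bar> \<le> e * h" using h by (simp add: pos_divide_less_eq)
    qed (rule \<delta>(1))
  qed
  then show ?thesis using N(1) by blast
qed

lemma ftc_le:
  fixes f \<phi> :: "real \<Rightarrow> real"
  assumes ac: "abs_cont_on {c..d} f" and cd: "c \<le> d" and int: "\<phi> integrable_on {c..d}"
    and nn: "\<And>t. t \<in> {c..d} \<Longrightarrow> 0 \<le> \<phi> t" and N: "negligible N"
    and der: "\<And>t. t \<in> {c..<d} \<Longrightarrow> t \<notin> N \<Longrightarrow>
        \<exists>D. (f has_real_derivative D) (at t within {c..d}) \<and> D \<le> \<phi> t"
  shows "f d - f c \<le> integral {c..d} \<phi>"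
proof -
  define G where "G t = integral {c..t} \<phi>" for t
  obtain N2 where N2: "negligible N2" "\<forall>t e. t \<in> {c..<d} \<and> t \<notin> N2 \<and> e > 0 \<longrightarrow>
      (\<exists>\<delta>>0. \<forall>h. 0 < h \<and> h < \<delta> \<and> t + h \<le> d \<longrightarrow> \<bar>integral {t..t+h} \<phi> - h * \<phi> t\<bar> \<le> e * h)"
    using right_deriv_integral[OF int] by blast
  have acG: "abs_cont_on {c..d} G" unfolding G_def by (rule ac_integral[OF int nn])
  have ack: "abs_cont_on {c..d} (\<lambda>t. f t - G t)" by (rule ac_diff[OF ac acG])
  have "f d - G d \<le> f c - G c"
  proof (rule ac_mono[OF ack cd, of "N \<union> N2"])
    show "negligible (N \<union> N2)" using N N2(1) by simp
    fix t e :: real assume t: "t \<in> {c..<d}" "t \<notin> N \<union> N2" and e: "e > 0"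
    obtain D where D: "(f has_real_derivative D) (at t within {c..d})" "D \<le> \<phi> t" using der t by blast
    have "((\<lambda>y. (f y - f t) / (y - t)) \<longlongrightarrow> D) (at t within {c..d})"
      using D(1) by (simp add: has_field_derivative_iff)
    then have "\<forall>\<^sub>F y in at t within {c..d}. dist ((f y - f t) / (y - t)) D < e/2"
      using e by (intro tendstoD) auto
    then obtain \<delta>1 where \<delta>1: "\<delta>1 > 0" "\<And>y. y \<in> {c..d} \<Longrightarrow> y \<noteq> t \<Longrightarrow> dist y t < \<delta>1 \<Longrightarrow>
        dist ((f y - f t) / (y - t)) D < e/2"
      unfolding eventually_at by blast
    obtain \<delta>2 where \<delta>2: "\<delta>2 > 0" "\<forall>h. 0 < h \<and> h < \<delta>2 \<and> t + h \<le> d \<longrightarrow> \<bar>integral {t..t+h} \<phi> - h * \<phi> t\<bar> \<le> e/2 * h"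
      using N2(2) t e by (meson UnI2 half_gt_zero)
    show "\<exists>\<delta>>0. \<forall>s. t < s \<and> s < t + \<delta> \<and> s \<le> d \<longrightarrow> f s - G s \<le> f t - G t + e * (s - t)"
    proof (intro exI[of _ "min \<delta>1 \<delta>2"] conjI allI impI)
      fix s assume s: "t < s \<and> s < t + min \<delta>1 \<delta>2 \<and> s \<le> d"
      have sc: "s \<in> {c..d}" using s t by auto
      have "s \<noteq> t" "dist s t < \<delta>1" using s by (auto simp: dist_real_def)
      then have "dist ((f s - f t) / (s - t)) D < e/2" using \<delta>1(2)[OF sc] by blast
      then have "\<bar>(f s - f t) / (s - t) - D\<bar> < e/2" by (simp only: dist_real_def)
      then have "(f s - f t) / (s - t) < D + e/2" by linarith
      then have fs: "f s - f t \<le> (D + e/2) * (s - t)" using s by (simp add: pos_divide_less_eq less_imp_le)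
      have "\<bar>integral {t..t+(s-t)} \<phi> - (s - t) * \<phi> t\<bar> \<le> e/2 * (s - t)"
      proof -
        have "0 < s - t \<and> s - t < \<delta>2 \<and> t + (s - t) \<le> d" using s by auto
        then show ?thesis using \<delta>2(2) by blast
      qed
      then have "\<bar>integral {t..s} \<phi> - (s - t) * \<phi> t\<bar> \<le> e/2 * (s - t)" by simp
      then have gi: "integral {t..s} \<phi> \<ge> (s - t) * \<phi> t - e/2 * (s - t)" by linarith
      have "G t + integral {t..s} \<phi> = G s" unfolding G_def
        by (rule Henstock_Kurzweil_Integration.integral_combine) (use t s integrable_on_subinterval[OF int, of c s] in auto)
      then have "G s - G t \<ge> (s - t) * \<phi> t - e/2 * (s - t)" using gi by simp
      moreover have "(D + e/2) * (s - t) \<le> (\<phi> t + e/2) * (s - t)" using D(2) s by (intro mult_right_mono) auto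
      ultimately have A: "G s - G t \<ge> (s - t) * \<phi> t - e/2 * (s - t)" "f s - f t \<le> (\<phi> t + e/2) * (s - t)"
        using fs by linarith+
      have "(\<phi> t + e/2) * (s - t) = (s - t) * \<phi> t - e/2 * (s - t) + e * (s - t)" by (simp add: algebra_simps)
      then show "f s - G s \<le> f t - G t + e * (s - t)" using A by linarith
    qed (use \<delta>1 \<delta>2 in auto)
  qed
  moreover have "G c = 0" by (simp add: G_def)
  ultimately show ?thesis by (simp add: G_def)
qed

lemma deriv_zero_const:
  fixes f :: "real \<Rightarrow> real"
  assumes ac: "\<And>a b. abs_cont_on {a..b} f" and N: "negligible N"
    and der: "\<And>t. t \<notin> N \<Longrightarrow> (f has_real_derivative 0) (at t)"
  shows "f t = f s"
proof -
  have le: "f y - f x \<le> 0" if xy: "x \<le> y"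
    and ac: "abs_cont_on {x..y} f" and der: "\<And>t. t \<notin> N \<Longrightarrow> (f has_real_derivative 0) (at t)"
    for x y :: real and f :: "real \<Rightarrow> real"
  proof -
    have "f y - f x \<le> integral {x..y} (\<lambda>t. 0::real)"
    proof (rule ftc_le[OF ac xy _ _ N])
      fix t assume "t \<in> {x..<y}" "t \<notin> N"
      then show "\<exists>D. (f has_real_derivative D) (at t within {x..y}) \<and> D \<le> 0"
        using der has_field_derivative_at_within by blast
    qed auto
    then show ?thesis by simp
  qed
  have der': "\<And>t. t \<notin> N \<Longrightarrow> ((\<lambda>t. - f t) has_real_derivative 0) (at t)"
    using der DERIV_minus by fastforce
  have "f t - f s \<le> 0 \<and> f s - f t \<le> 0"
  proof (cases "s \<le> t")
    case True
    then show ?thesis using le[of s t f, OF True ac der] le[of s t "\<lambda>t. - f t", OF True ac_minus[OF ac] der'] by simp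
  next
    case False
    then have ts: "t \<le> s" by simp
    then show ?thesis using le[of t s f, OF ts ac der] le[of t s "\<lambda>t. - f t", OF ts ac_minus[OF ac] der'] by simp
  qed
  then show ?thesis by simp
qed

abbreviation q1 :: "pt4 \<Rightarrow> real" where "q1 p \<equiv> fst p"
abbreviation q2 :: "pt4 \<Rightarrow> real" where "q2 p \<equiv> fst (snd p)"
abbreviation q3 :: "pt4 \<Rightarrow> real" where "q3 p \<equiv> fst (snd (snd p))"
abbreviation q4 :: "pt4 \<Rightarrow> real" where "q4 p \<equiv> snd (snd (snd p))"

lemma adj_field_eq: "adj_field g w p =
  (q4 p * q2 g * fst w / 12 - (q3 p / 2 + q4 p * q1 g / 6) * snd w,
   (q3 p / 2 + q4 p * q1 g / 12) * fst w, q4 p * fst w / 2, 0)"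
  by (cases g, cases w, cases p) (simp add: adj_field_def)

lemma ctrl_field_eq: "ctrl_field g w =
  (fst w, snd w, (q1 g * snd w - q2 g * fst w) / 2,
   - (q3 g + q1 g * q2 g / 6) * fst w / 2 + (q1 g)^2 * snd w / 12)"
  by (cases g, cases w) (simp add: ctrl_field_def)

lemma hvec_eq: "hvec g p =
  (q1 p - q3 p * q2 g / 2 - q4 p * q1 g * q2 g / 12 - q4 p * q3 g / 2,
   q2 p + q3 p * q1 g / 2 + q4 p * (q1 g)^2 / 12)"
  by (cases g, cases p) (simp add: hvec_def)

lemma hvd_fst: "(f has_vector_derivative D) F \<Longrightarrow> ((\<lambda>x. fst (f x)) has_vector_derivative fst D) F"
  unfolding has_vector_derivative_def by (drule has_derivative_fst) simp
lemma hvd_snd: "(f has_vector_derivative D) F \<Longrightarrow> ((\<lambda>x. snd (f x)) has_vector_derivative snd D) F"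
  unfolding has_vector_derivative_def by (drule has_derivative_snd) simp

lemma hvd_q:
  assumes "(f has_vector_derivative D) F"
  shows "((\<lambda>x. q1 (f x)) has_real_derivative q1 D) F" "((\<lambda>x. q2 (f x)) has_real_derivative q2 D) F"
        "((\<lambda>x. q3 (f x)) has_real_derivative q3 D) F" "((\<lambda>x. q4 (f x)) has_real_derivative q4 D) F"
  unfolding has_real_derivative_iff_has_vector_derivative
  using hvd_fst[OF assms] hvd_fst[OF hvd_snd[OF assms]] hvd_fst[OF hvd_snd[OF hvd_snd[OF assms]]]
    hvd_snd[OF hvd_snd[OF hvd_snd[OF assms]]] by auto

lemma ac_q:
  assumes "abs_cont_on S f"
  shows "abs_cont_on S (\<lambda>x. q1 (f x))" "abs_cont_on S (\<lambda>x. q2 (f x))"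
        "abs_cont_on S (\<lambda>x. q3 (f x))" "abs_cont_on S (\<lambda>x. q4 (f x))"
  using ac_fst[OF assms] ac_fst[OF ac_snd[OF assms]] ac_fst[OF ac_snd[OF ac_snd[OF assms]]]
    ac_snd[OF ac_snd[OF ac_snd[OF assms]]] by auto

lemma normal_extD:
  assumes "normal_ext F g u \<psi>"
  shows "g 0 = (0,0,0,0)" "u \<in> borel_measurable lborel" "\<And>t. F (u t) \<le> 1"
    "\<And>a b. abs_cont_on {a..b} g" "\<And>a b. abs_cont_on {a..b} \<psi>" "\<And>t. \<psi> t \<noteq> 0"
    "\<exists>N. negligible N \<and> (\<forall>t. t \<notin> N \<longrightarrow> (g has_vector_derivative ctrl_field (g t) (u t)) (at t)
        \<and> (\<psi> has_vector_derivative adj_field (g t) (u t) (\<psi> t)) (at t)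
        \<and> fst (hvec (g t) (\<psi> t)) * fst (u t) + snd (hvec (g t) (\<psi> t)) * snd (u t) = FU F (hvec (g t) (\<psi> t))
        \<and> FU F (hvec (g t) (\<psi> t)) = 1)"
proof -
  note ne = assms[unfolded normal_ext_def]
  show "g 0 = (0,0,0,0)" "u \<in> borel_measurable lborel" "\<And>t. F (u t) \<le> 1"
    "\<And>a b. abs_cont_on {a..b} g" "\<And>a b. abs_cont_on {a..b} \<psi>" "\<And>t. \<psi> t \<noteq> 0" using ne by auto
  have "AE t in lborel. (g has_vector_derivative ctrl_field (g t) (u t)) (at t)
        \<and> (\<psi> has_vector_derivative adj_field (g t) (u t) (\<psi> t)) (at t)
        \<and> (fst (hvec (g t) (\<psi> t)) * fst (u t) + snd (hvec (g t) (\<psi> t)) * snd (u t) = FU F (hvec (g t) (\<psi> t))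
        \<and> FU F (hvec (g t) (\<psi> t)) = 1)"
    using ne by (intro AE_conjI) auto
  then show "\<exists>N. negligible N \<and> (\<forall>t. t \<notin> N \<longrightarrow> (g has_vector_derivative ctrl_field (g t) (u t)) (at t)
        \<and> (\<psi> has_vector_derivative adj_field (g t) (u t) (\<psi> t)) (at t)
        \<and> fst (hvec (g t) (\<psi> t)) * fst (u t) + snd (hvec (g t) (\<psi> t)) * snd (u t) = FU F (hvec (g t) (\<psi> t))
        \<and> FU F (hvec (g t) (\<psi> t)) = 1)"
    by (rule ae_negl)
qed

lemma psi_const:
  assumes ne: "normal_ext F g u \<psi>" and p3: "q3 (\<psi> 0) = 0" and p4: "q4 (\<psi> 0) = 0"
  shows "\<psi> t = (q1 (\<psi> 0), q2 (\<psi> 0), 0, 0)"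
proof -
  obtain N where N: "negligible N" "\<And>t. t \<notin> N \<Longrightarrow> (\<psi> has_vector_derivative adj_field (g t) (u t) (\<psi> t)) (at t)"
    using normal_extD(7)[OF ne] by blast
  note ac = normal_extD(5)[OF ne]
  have d4: "\<And>s. s \<notin> N \<Longrightarrow> ((\<lambda>x. q4 (\<psi> x)) has_real_derivative 0) (at s)"
    using hvd_q(4)[OF N(2)] by (simp add: adj_field_eq)
  have z4: "q4 (\<psi> s) = 0" for s
    using deriv_zero_const[OF ac_q(4)[OF ac] N(1) d4, of s 0] p4 by simp
  have d3: "\<And>s. s \<notin> N \<Longrightarrow> ((\<lambda>x. q3 (\<psi> x)) has_real_derivative 0) (at s)"
    using hvd_q(3)[OF N(2)] z4 by (simp add: adj_field_eq)
  have z3: "q3 (\<psi> s) = 0" for s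
    using deriv_zero_const[OF ac_q(3)[OF ac] N(1) d3, of s 0] p3 by simp
  have d1: "\<And>s. s \<notin> N \<Longrightarrow> ((\<lambda>x. q1 (\<psi> x)) has_real_derivative 0) (at s)"
    using hvd_q(1)[OF N(2)] z4 z3 by (simp add: adj_field_eq)
  have d2: "\<And>s. s \<notin> N \<Longrightarrow> ((\<lambda>x. q2 (\<psi> x)) has_real_derivative 0) (at s)"
    using hvd_q(2)[OF N(2)] z4 z3 by (simp add: adj_field_eq)
  have "q1 (\<psi> t) = q1 (\<psi> 0)" by (rule deriv_zero_const[OF ac_q(1)[OF ac] N(1) d1])
  moreover have "q2 (\<psi> t) = q2 (\<psi> 0)" by (rule deriv_zero_const[OF ac_q(2)[OF ac] N(1) d2])
  ultimately show ?thesis using z3[of t] z4[of t] by (metis prod.collapse)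
qed

lemma theta_const:
  fixes \<theta> :: "real \<Rightarrow> real"
  assumes n: "is_norm F" and cont: "continuous_on UNIV \<theta>"
    and h: "\<And>t. rpol F (\<theta> t) *\<^sub>R ev (\<theta> t) = hc"
  shows "\<theta> t = \<theta> 0"
proof -
  have nr: "rpol F (\<theta> s) = norm hc" for s
    using h[of s] rpol_eq(2)[OF n, of "\<theta> s"] ev_norm[of "\<theta> s"] by (metis abs_of_pos mult.right_neutral norm_scaleR)
  have ev_eq: "ev (\<theta> s) = ev (\<theta> 0)" for s
  proof -
    have "rpol F (\<theta> s) *\<^sub>R ev (\<theta> s) = rpol F (\<theta> 0) *\<^sub>R ev (\<theta> 0)" using h by simp
    moreover have "rpol F (\<theta> s) = rpol F (\<theta> 0)" using nr by simp
    moreover have "rpol F (\<theta> 0) > 0" by (rule rpol_eq(2)[OF n])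
    ultimately show ?thesis by simp
  qed
  have int: "(\<theta> s - \<theta> 0) / (2 * pi) \<in> \<int>" for s
  proof -
    have "cos (\<theta> s) = cos (\<theta> 0)" "sin (\<theta> s) = sin (\<theta> 0)" using ev_eq[of s] by (auto simp: ev_def)
    then have "cos (\<theta> s - \<theta> 0) = 1" by (simp add: cos_diff)
    then obtain m :: int where "\<theta> s - \<theta> 0 = real_of_int m * 2 * pi" using cos_one_2pi_int by blast
    then have "(\<theta> s - \<theta> 0) / (2 * pi) = real_of_int m" by (simp add: field_simps)
    then show ?thesis by simp
  qed
  define k where "k s = (\<theta> s - \<theta> 0) / (2 * pi)" for s
  have ck: "continuous_on UNIV k" unfolding k_def by (intro continuous_intros cont) simp
  have conn: "connected (range k)" by (rule connected_continuous_image[OF ck]) simp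
  have k0: "k 0 = 0" by (simp add: k_def)
  have "k t = 0"
  proof (rule ccontr)
    assume nz: "k t \<noteq> 0"
    obtain m :: int where m: "k t = of_int m" using int[of t] unfolding k_def by (auto elim: Ints_cases)
    have m1: "\<bar>k t\<bar> \<ge> 1" using nz m by simp
    define z where "z = (if k t > 0 then 1/2 else -1/2 :: real)"
    have "z \<in> range k"
    proof (cases "k t > 0")
      case True
      then show ?thesis using conn[unfolded connected_iff_interval, rule_format, of "k 0" "k t" z] k0 m1
        by (auto simp: z_def)
    next
      case False
      then show ?thesis using conn[unfolded connected_iff_interval, rule_format, of "k t" "k 0" z] k0 m1 nz
        by (auto simp: z_def)
    qed
    then obtain s where "k s = z" by blast
    then have "z \<in> \<int>" using int[of s] by (simp add: k_def)
    then obtain j :: int where "z = of_int j" by (auto elim: Ints_cases)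
    then have "2 * of_int j = (if k t > 0 then 1 else -1 :: real)" by (auto simp: z_def split: if_splits)
    then have "2 * j = (if k t > 0 then 1 else -1 :: int)" by (auto split: if_splits)
    then show False by (cases "0 < k t") presburger+
  qed
  then show ?thesis by (simp add: k_def)
qed

definition ustar :: "(real \<times> real \<Rightarrow> real) \<Rightarrow> real \<Rightarrow> real \<Rightarrow> real \<times> real" where
  "ustar F \<theta> r' = ((r' * sin \<theta> + rpol F \<theta> * cos \<theta>) / (rpol F \<theta>)^2,
                      (rpol F \<theta> * sin \<theta> - r' * cos \<theta>) / (rpol F \<theta>)^2)"

lemma face_exists: assumes n: "is_norm F"
  shows "\<exists>u. F u \<le> 1 \<and> inner (rpol F \<theta> *\<^sub>R ev \<theta>) u = 1"
  using FU_attain[OF n, of "rpol F \<theta> *\<^sub>R ev \<theta>"] rpol_eq(3)[OF n] by auto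

lemma face_unique:
  assumes n: "is_norm F" and d: "(rpol F has_real_derivative r') (at \<theta>0)"
    and u: "F u \<le> 1" "inner (rpol F \<theta>0 *\<^sub>R ev \<theta>0) u = 1"
  shows "u = ustar F \<theta>0 r'"
proof -
  define r0 where "r0 = rpol F \<theta>0"
  have r0: "r0 > 0" using rpol_eq(2)[OF n] by (simp add: r0_def)
  define q where "q \<theta> = rpol F \<theta> * (cos \<theta> * fst u + sin \<theta> * snd u)" for \<theta>
  have qi: "q \<theta> = inner (rpol F \<theta> *\<^sub>R ev \<theta>) u" for \<theta>
    by (cases u) (simp add: q_def ev_def algebra_simps)
  have qle: "q \<theta> \<le> q \<theta>0" for \<theta>
  proof -
    have "inner (rpol F \<theta> *\<^sub>R ev \<theta>) u \<le> FU F (rpol F \<theta> *\<^sub>R ev \<theta>) * F u" by (rule FU_le[OF n])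
    also have "\<dots> \<le> 1" using rpol_eq(3)[OF n] u(1) by simp
    finally show ?thesis using qi u(2) by simp
  qed
  define A where "A = cos \<theta>0 * fst u + sin \<theta>0 * snd u"
  define B where "B = - sin \<theta>0 * fst u + cos \<theta>0 * snd u"
  have dq: "(q has_real_derivative (r' * A + r0 * B)) (at \<theta>0)"
    unfolding q_def A_def B_def r0_def
    by (rule derivative_eq_intros d refl)+ (simp add: algebra_simps)
  have B0: "r' * A + r0 * B = 0" by (rule DERIV_local_max[OF dq zero_less_one]) (use qle in blast)
  have A1: "r0 * A = 1" using u(2) qi[of \<theta>0] by (simp add: q_def A_def r0_def)
  have cs: "cos \<theta>0 ^ 2 + sin \<theta>0 ^ 2 = 1" by simp
  have e: "cos \<theta>0 * cos \<theta>0 + sin \<theta>0 * sin \<theta>0 = 1"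
    using sin_cos_squared_add[of \<theta>0] by (simp add: power2_eq_square add.commute)
  have u1: "fst u = cos \<theta>0 * A - sin \<theta>0 * B"
  proof -
    have "cos \<theta>0 * A - sin \<theta>0 * B = fst u * (cos \<theta>0 * cos \<theta>0) + fst u * (sin \<theta>0 * sin \<theta>0)"
      unfolding A_def B_def by (simp add: algebra_simps)
    also have "\<dots> = fst u * (cos \<theta>0 * cos \<theta>0 + sin \<theta>0 * sin \<theta>0)" by (simp only: distrib_left)
    also have "\<dots> = fst u" using e by simp
    finally show ?thesis by simp
  qed
  have u2: "snd u = sin \<theta>0 * A + cos \<theta>0 * B"
  proof -
    have "sin \<theta>0 * A + cos \<theta>0 * B = snd u * (cos \<theta>0 * cos \<theta>0) + snd u * (sin \<theta>0 * sin \<theta>0)"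
      unfolding A_def B_def by (simp add: algebra_simps)
    also have "\<dots> = snd u * (cos \<theta>0 * cos \<theta>0 + sin \<theta>0 * sin \<theta>0)" by (simp only: distrib_left)
    also have "\<dots> = snd u" using e by simp
    finally show ?thesis by simp
  qed
  have Av: "A = 1 / r0" using A1 r0 by (simp add: field_simps)
  have Bv: "B = - r' / r0^2" using B0 Av r0 by (simp add: field_simps power2_eq_square)
  have "fst u = (r' * sin \<theta>0 + r0 * cos \<theta>0) / r0^2"
    using u1 Av Bv r0 by (simp add: field_simps power2_eq_square)
  moreover have "snd u = (r0 * sin \<theta>0 - r' * cos \<theta>0) / r0^2"
    using u2 Av Bv r0 by (simp add: field_simps power2_eq_square)
  ultimately show ?thesis unfolding ustar_def r0_def by (metis prod.collapse)
qed

lemma ac_lin_vec: "abs_cont_on S (\<lambda>t::real. t *\<^sub>R V)"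
proof -
  have "norm (x *\<^sub>R V - y *\<^sub>R V) \<le> norm V * norm (x - y)" for x y :: real
    by (simp add: scaleR_diff_left[symmetric])
  then show ?thesis using ac_lip[OF ac_id, of "\<lambda>s. s *\<^sub>R V" "norm V"] by simp
qed

lemma lin_vec_eq: "(\<lambda>t::real. (a * t, b * t, 0::real, 0::real)) = (\<lambda>t. t *\<^sub>R (a, b, 0, 0))"
  by (auto simp: fun_eq_iff)

lemma hvd_lin_vec: "((\<lambda>t. t *\<^sub>R V) has_vector_derivative V) (at t)"
  using has_vector_derivative_scaleR[OF DERIV_ident has_vector_derivative_const[of V]] by simp

lemma lin_in_ext:
  assumes n: "is_norm F" and u0: "F u0 \<le> 1" "inner (rpol F \<theta>0 *\<^sub>R ev \<theta>0) u0 = 1"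
  shows "(\<lambda>t. (fst u0 * t, snd u0 * t, 0, 0)) \<in> ext_data F \<theta>0"
proof -
  define r0 where "r0 = rpol F \<theta>0"
  have r0: "r0 > 0" using rpol_eq(2)[OF n] by (simp add: r0_def)
  define V :: pt4 where "V = (fst u0, snd u0, 0, 0)"
  define g where "g = (\<lambda>t::real. t *\<^sub>R V)"
  define \<psi>0 :: pt4 where "\<psi>0 = (r0 * cos \<theta>0, r0 * sin \<theta>0, 0, 0)"
  have geq: "(\<lambda>t. (fst u0 * t, snd u0 * t, 0, 0)) = g" unfolding g_def V_def lin_vec_eq ..
  have cf: "ctrl_field (g t) u0 = V" for t
    by (simp add: ctrl_field_eq g_def V_def algebra_simps power2_eq_square)
  have af: "adj_field (g t) u0 \<psi>0 = 0" for t by (simp add: adj_field_eq \<psi>0_def zero_prod_def)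
  have hv: "hvec (g t) \<psi>0 = r0 *\<^sub>R ev \<theta>0" for t by (simp add: hvec_eq \<psi>0_def ev_def)
  have FU1: "FU F (r0 *\<^sub>R ev \<theta>0) = 1" using rpol_eq(3)[OF n] by (simp add: r0_def)
  have dot: "fst (hvec (g t) \<psi>0) * fst u0 + snd (hvec (g t) \<psi>0) * snd u0 = FU F (hvec (g t) \<psi>0) \<and>
      FU F (hvec (g t) \<psi>0) = 1" for t
    using u0(2) FU1 unfolding hv dot_inner r0_def by simp
  have nz: "\<psi>0 \<noteq> 0"
  proof
    assume "\<psi>0 = 0"
    then have "r0 * cos \<theta>0 = 0" "r0 * sin \<theta>0 = 0" by (auto simp: \<psi>0_def zero_prod_def)
    then have "cos \<theta>0 = 0" "sin \<theta>0 = 0" using r0 by auto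
    then show False using sin_cos_squared_add[of \<theta>0] by simp
  qed
  have "normal_ext F g (\<lambda>_. u0) (\<lambda>_. \<psi>0)"
    unfolding normal_ext_def
  proof (intro conjI allI AE_I2)
    show "g 0 = (0, 0, 0, 0)" by (simp add: g_def zero_prod_def)
    show "(\<lambda>_. u0) \<in> borel_measurable lborel" by simp
    show "F u0 \<le> 1" by (rule u0(1))
    show "abs_cont_on {a..b} g" for a b unfolding g_def by (rule ac_lin_vec)
    show "(g has_vector_derivative ctrl_field (g t) u0) (at t)" for t
      unfolding cf unfolding g_def by (rule hvd_lin_vec)
    show "abs_cont_on {a..b} (\<lambda>_. \<psi>0)" for a b by (rule ac_const)
    show "\<psi>0 \<noteq> 0" by (rule nz)
    show "((\<lambda>_. \<psi>0) has_vector_derivative adj_field (g t) u0 \<psi>0) (at t)" for t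
      unfolding af by (rule has_vector_derivative_const)
    show "fst (hvec (g t) \<psi>0) * fst u0 + snd (hvec (g t) \<psi>0) * snd u0 = FU F (hvec (g t) \<psi>0)" for t
      using dot by blast
    show "FU F (hvec (g t) \<psi>0) = 1" for t using dot by blast
  qed
  then show ?thesis unfolding ext_data_def geq \<psi>0_def r0_def by blast
qed

lemma negl_ex: "negligible (N::real set) \<Longrightarrow> \<exists>t. t \<notin> N"
proof (rule ccontr)
  assume "negligible N" "\<not> (\<exists>t. t \<notin> N)"
  then have "negligible {0..1::real}" using negligible_subset[of N "{0..1}"] by auto
  then show False using negligible_interval(1)[of "0::real" 1] by simp
qed

lemma ne_facts:
  assumes n: "is_norm F" and ne: "normal_ext F g u \<psi>" and p3: "q3 (\<psi> 0) = 0" and p4: "q4 (\<psi> 0) = 0"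
  shows "\<And>t. hvec (g t) (\<psi> t) = (q1 (\<psi> 0), q2 (\<psi> 0))" "FU F (q1 (\<psi> 0), q2 (\<psi> 0)) = 1"
    "\<exists>N. negligible N \<and> (\<forall>t. t \<notin> N \<longrightarrow> (g has_vector_derivative ctrl_field (g t) (u t)) (at t)
        \<and> inner (q1 (\<psi> 0), q2 (\<psi> 0)) (u t) = 1)"
proof -
  show hv: "hvec (g t) (\<psi> t) = (q1 (\<psi> 0), q2 (\<psi> 0))" for t
    using psi_const[OF ne p3 p4, of t] by (simp add: hvec_eq)
  obtain N where N: "negligible N" "\<forall>t. t \<notin> N \<longrightarrow> (g has_vector_derivative ctrl_field (g t) (u t)) (at t)
        \<and> (\<psi> has_vector_derivative adj_field (g t) (u t) (\<psi> t)) (at t)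
        \<and> fst (hvec (g t) (\<psi> t)) * fst (u t) + snd (hvec (g t) (\<psi> t)) * snd (u t) = FU F (hvec (g t) (\<psi> t))
        \<and> FU F (hvec (g t) (\<psi> t)) = 1"
    using normal_extD(7)[OF ne] by blast
  obtain t0 where "t0 \<notin> N" using negl_ex[OF N(1)] by blast
  then show "FU F (q1 (\<psi> 0), q2 (\<psi> 0)) = 1" using N(2) hv by metis
  show "\<exists>N. negligible N \<and> (\<forall>t. t \<notin> N \<longrightarrow> (g has_vector_derivative ctrl_field (g t) (u t)) (at t)
        \<and> inner (q1 (\<psi> 0), q2 (\<psi> 0)) (u t) = 1)"
  proof (intro exI[of _ N] conjI allI impI)
    fix t assume t: "t \<notin> N"
    show "(g has_vector_derivative ctrl_field (g t) (u t)) (at t)" using N(2) t by blast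
    have "fst (hvec (g t) (\<psi> t)) * fst (u t) + snd (hvec (g t) (\<psi> t)) * snd (u t) = 1" using N(2) t by metis
    then show "inner (q1 (\<psi> 0), q2 (\<psi> 0)) (u t) = 1" unfolding hv dot_inner .
  qed (rule N(1))
qed

lemma ext_linear:
  assumes n: "is_norm F" and uniq: "\<And>u. F u \<le> 1 \<Longrightarrow> inner (rpol F \<theta>0 *\<^sub>R ev \<theta>0) u = 1 \<Longrightarrow> u = u0"
    and g: "g \<in> ext_data F \<theta>0"
  shows "g = (\<lambda>t. (fst u0 * t, snd u0 * t, 0, 0))"
proof -
  obtain u \<psi> where ne: "normal_ext F g u \<psi>" and p0: "\<psi> 0 = (rpol F \<theta>0 * cos \<theta>0, rpol F \<theta>0 * sin \<theta>0, 0, 0)"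
    using g unfolding ext_data_def by blast
  have hc: "(q1 (\<psi> 0), q2 (\<psi> 0)) = rpol F \<theta>0 *\<^sub>R ev \<theta>0" using p0 by (simp add: ev_def)
  obtain N where N: "negligible N" "\<And>t. t \<notin> N \<Longrightarrow> (g has_vector_derivative ctrl_field (g t) (u t)) (at t)
        \<and> inner (q1 (\<psi> 0), q2 (\<psi> 0)) (u t) = 1"
    using ne_facts(3)[OF n ne] p0 by auto
  have ut: "u t = u0" if "t \<notin> N" for t
    using uniq[OF normal_extD(3)[OF ne]] N(2)[OF that] hc by simp
  have dg: "(g has_vector_derivative ctrl_field (g t) u0) (at t)" if "t \<notin> N" for t
    using N(2)[OF that] ut[OF that] by simp
  note acg = normal_extD(4)[OF ne]
  note g0 = normal_extD(1)[OF ne]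
  define a where "a = fst u0"
  define b where "b = snd u0"
  have x: "q1 (g t) = a * t" for t
  proof -
    have "q1 (g t) - a * t = q1 (g 0) - a * 0"
    proof (rule deriv_zero_const[OF ac_diff[OF ac_q(1)[OF acg] ac_lin[where q=0, simplified]] N(1)])
      fix s assume "s \<notin> N"
      then show "((\<lambda>t. q1 (g t) - a * t) has_real_derivative 0) (at s)"
        using hvd_q(1)[OF dg] by (auto intro!: derivative_eq_intros simp: ctrl_field_eq a_def)
    qed
    then show ?thesis using g0 by simp
  qed
  have y: "q2 (g t) = b * t" for t
  proof -
    have "q2 (g t) - b * t = q2 (g 0) - b * 0"
    proof (rule deriv_zero_const[OF ac_diff[OF ac_q(2)[OF acg] ac_lin[where q=0, simplified]] N(1)])
      fix s assume "s \<notin> N"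
      then show "((\<lambda>t. q2 (g t) - b * t) has_real_derivative 0) (at s)"
        using hvd_q(2)[OF dg] by (auto intro!: derivative_eq_intros simp: ctrl_field_eq b_def)
    qed
    then show ?thesis using g0 by simp
  qed
  have z: "q3 (g t) = 0" for t
  proof -
    have "q3 (g t) = q3 (g 0)"
    proof (rule deriv_zero_const[OF ac_q(3)[OF acg] N(1)])
      fix s assume s: "s \<notin> N"
      have "ctrl_field (g s) u0 = (a, b, 0, q4 (ctrl_field (g s) u0))"
        by (simp add: ctrl_field_eq x y a_def b_def algebra_simps)
      then show "((\<lambda>t. q3 (g t)) has_real_derivative 0) (at s)"
        using hvd_q(3)[OF dg[OF s]] by (metis fst_conv snd_conv)
    qed
    then show ?thesis using g0 by simp
  qed
  have v: "q4 (g t) = 0" for t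
  proof -
    have "q4 (g t) = q4 (g 0)"
    proof (rule deriv_zero_const[OF ac_q(4)[OF acg] N(1)])
      fix s assume s: "s \<notin> N"
      have "q4 (ctrl_field (g s) u0) = 0"
        by (simp add: ctrl_field_eq x y z a_def b_def algebra_simps power2_eq_square)
      then show "((\<lambda>t. q4 (g t)) has_real_derivative 0) (at s)"
        using hvd_q(4)[OF dg[OF s]] by simp
    qed
    then show ?thesis using g0 by simp
  qed
  show ?thesis
  proof
    fix t show "g t = (fst u0 * t, snd u0 * t, 0, 0)"
      using x[of t] y[of t] z[of t] v[of t] unfolding a_def b_def by (metis prod.collapse)
  qed
qed

lemma cos_lip: "\<bar>cos (a::real) - cos b\<bar> \<le> \<bar>a - b\<bar>"
proof -
  have "\<bar>cos a - cos b\<bar> = 2 * \<bar>sin ((a + b) / 2)\<bar> * \<bar>sin ((b - a) / 2)\<bar>"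
    by (simp add: cos_diff_cos abs_mult)
  also have "\<dots> \<le> 2 * 1 * \<bar>(b - a) / 2\<bar>"
    by (intro mult_mono abs_sin_le_one abs_sin_x_le_abs_x) auto
  finally show ?thesis by simp
qed

lemma sin_lip: "\<bar>sin (a::real) - sin b\<bar> \<le> \<bar>a - b\<bar>"
proof -
  have "\<bar>sin a - sin b\<bar> = 2 * \<bar>sin ((a - b) / 2)\<bar> * \<bar>cos ((a + b) / 2)\<bar>"
    by (simp add: sin_diff_sin abs_mult)
  also have "\<dots> \<le> 2 * \<bar>(a - b) / 2\<bar> * 1"
    by (intro mult_mono abs_cos_le_one abs_sin_x_le_abs_x) auto
  finally show ?thesis by simp
qed

lemma ev_lip: "norm (ev a - ev b) \<le> 2 * \<bar>a - b\<bar>"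
proof -
  have "norm (ev a - ev b) = norm (cos a - cos b, sin a - sin b)" by (simp add: ev_def)
  also have "\<dots> \<le> norm (cos a - cos b) + norm (sin a - sin b)" by (rule norm_Pair_le)
  also have "\<dots> \<le> \<bar>a - b\<bar> + \<bar>a - b\<bar>" using cos_lip[of a b] sin_lip[of a b] by simp
  finally show ?thesis by simp
qed

lemma face_cont:
  assumes n: "is_norm F" and u0: "F u0 \<le> 1" "inner (ev \<theta>0) u0 = FU F (ev \<theta>0)"
    and uniq: "\<And>u. F u \<le> 1 \<Longrightarrow> inner (ev \<theta>0) u = FU F (ev \<theta>0) \<Longrightarrow> u = u0"
    and R: "R > 0" "\<And>u. F u \<le> 1 \<Longrightarrow> norm u \<le> R" and e: "\<epsilon> > 0"
  shows "\<exists>\<eta>>0. \<forall>\<theta> u. \<bar>\<theta> - \<theta>0\<bar> < \<eta> \<and> F u \<le> 1 \<and> inner (ev \<theta>) u = FU F (ev \<theta>) \<longrightarrow> norm (u - u0) < \<epsilon>"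
proof -
  define K where "K = {u. F u \<le> 1} \<inter> {u. \<epsilon> \<le> norm (u - u0)}"
  have cK: "compact K" unfolding K_def
  proof (rule compact_Int_closed[OF U_compact[OF n]])
    show "closed {u. \<epsilon> \<le> norm (u - u0)}" by (intro closed_Collect_le continuous_intros)
  qed
  show ?thesis
  proof (cases "K = {}")
    case True
    then show ?thesis unfolding K_def by (intro exI[of _ 1]) (auto simp: not_le)
  next
    case False
    have "continuous_on K (\<lambda>u. inner (ev \<theta>0) u)" by (intro continuous_intros)
    then obtain u1 where u1: "u1 \<in> K" "\<And>u. u \<in> K \<Longrightarrow> inner (ev \<theta>0) u \<le> inner (ev \<theta>0) u1"
      using continuous_attains_sup[OF cK False] by blast
    have u1F: "F u1 \<le> 1" "\<epsilon> \<le> norm (u1 - u0)" using u1(1) by (auto simp: K_def)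
    have le1: "inner (ev \<theta>0) u1 \<le> FU F (ev \<theta>0)" by (rule FU_ub[OF n u1F(1)])
    have ne1: "inner (ev \<theta>0) u1 \<noteq> FU F (ev \<theta>0)"
    proof
      assume "inner (ev \<theta>0) u1 = FU F (ev \<theta>0)"
      then have "u1 = u0" using uniq u1F(1) by blast
      then show False using u1F(2) e by simp
    qed
    define \<gamma> where "\<gamma> = FU F (ev \<theta>0) - inner (ev \<theta>0) u1"
    have \<gamma>: "\<gamma> > 0" using le1 ne1 by (simp add: \<gamma>_def)
    define \<eta> where "\<eta> = \<gamma> / (4 * (R + 1))"
    have \<eta>: "\<eta> > 0" using \<gamma> R by (simp add: \<eta>_def)
    have small: "\<bar>inner (ev \<theta>) w - inner (ev \<theta>0) w\<bar> < \<gamma> / 2"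
      if "\<bar>\<theta> - \<theta>0\<bar> < \<eta>" "F w \<le> 1" for \<theta> w
    proof -
      have "\<bar>inner (ev \<theta>) w - inner (ev \<theta>0) w\<bar> = \<bar>inner (ev \<theta> - ev \<theta>0) w\<bar>" by (simp add: inner_diff_left)
      also have "\<dots> \<le> norm (ev \<theta> - ev \<theta>0) * norm w" by (rule Cauchy_Schwarz_ineq2)
      also have "\<dots> \<le> (2 * \<bar>\<theta> - \<theta>0\<bar>) * R" by (intro mult_mono ev_lip R(2) that(2)) auto
      also have "\<dots> \<le> (2 * \<eta>) * R" using that(1) R by (intro mult_right_mono) auto
      also have "\<dots> = \<gamma> / 2 * (R / (R + 1))" using R(1) by (simp add: \<eta>_def field_simps)
      also have "\<dots> < \<gamma> / 2 * 1" using \<gamma> R by (intro mult_strict_left_mono) auto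
      finally show ?thesis by simp
    qed
    show ?thesis
    proof (intro exI[of _ \<eta>] conjI allI impI)
      fix \<theta> u assume H: "\<bar>\<theta> - \<theta>0\<bar> < \<eta> \<and> F u \<le> 1 \<and> inner (ev \<theta>) u = FU F (ev \<theta>)"
      show "norm (u - u0) < \<epsilon>"
      proof (rule ccontr)
        assume "\<not> norm (u - u0) < \<epsilon>"
        then have "u \<in> K" using H by (auto simp: K_def)
        then have a: "inner (ev \<theta>0) u \<le> inner (ev \<theta>0) u1" by (rule u1(2))
        have b: "inner (ev \<theta>) u < inner (ev \<theta>0) u + \<gamma> / 2" using small[of \<theta> u] H by linarith
        have c: "inner (ev \<theta>0) u0 - \<gamma> / 2 < inner (ev \<theta>) u0" using small[of \<theta> u0] H u0(1) by linarith
        have d: "inner (ev \<theta>) u0 \<le> FU F (ev \<theta>)" by (rule FU_ub[OF n u0(1)])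
        have f: "inner (ev \<theta>) u = FU F (ev \<theta>)" using H by blast
        show False using a b c d f u0(2) unfolding \<gamma>_def by argo
      qed
    qed (rule \<eta>)
  qed
qed

lemma inner_ev: "inner (ev \<theta>) u = cos \<theta> * fst u + sin \<theta> * snd u"
  by (cases u) (simp add: ev_def)

lemma diff_unique:
  assumes n: "is_norm F" and u0: "F u0 \<le> 1" "inner (rpol F \<theta>0 *\<^sub>R ev \<theta>0) u0 = 1"
    and uniq: "\<And>u. F u \<le> 1 \<Longrightarrow> inner (rpol F \<theta>0 *\<^sub>R ev \<theta>0) u = 1 \<Longrightarrow> u = u0"
  shows "rpol F differentiable (at \<theta>0)"
proof -
  define N where "N \<theta> = FU F (ev \<theta>)" for \<theta>
  have Npos: "N \<theta> > 0" for \<theta> unfolding N_def by (rule FU_pos[OF n ev_nz])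
  have rN: "rpol F \<theta> = 1 / N \<theta>" for \<theta> unfolding N_def by (rule rpol_eq(1)[OF n])
  have u0': "inner (ev \<theta>0) u0 = N \<theta>0"
    using u0(2) rN[of \<theta>0] Npos[of \<theta>0] by (simp add: field_simps)
  have uniq': "u = u0" if "F u \<le> 1" "inner (ev \<theta>0) u = FU F (ev \<theta>0)" for u
    using uniq[OF that(1)] that(2) rN[of \<theta>0] Npos[of \<theta>0] by (simp add: N_def)
  obtain R where R: "R > 0" "\<And>u. F u \<le> 1 \<Longrightarrow> norm u \<le> R" using U_bounded[OF n] by blast
  define M where "M \<theta> = N \<theta> - inner (ev \<theta>) u0" for \<theta>
  have M0: "M \<theta>0 = 0" using u0' by (simp add: M_def)
  have Mnn: "0 \<le> M \<theta>" for \<theta> using FU_ub[OF n u0(1), of "ev \<theta>"] by (simp add: M_def N_def)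
  have Mle: "M \<theta> \<le> 2 * \<bar>\<theta> - \<theta>0\<bar> * norm (w - u0)" if w: "F w \<le> 1" "inner (ev \<theta>) w = N \<theta>" for \<theta> w
  proof -
    have "inner (ev \<theta>0) w \<le> N \<theta>0" using FU_ub[OF n w(1)] by (simp add: N_def)
    then have "M \<theta> \<le> inner (ev \<theta>) (w - u0) - inner (ev \<theta>0) (w - u0)"
      using w(2) u0' by (simp add: M_def inner_diff_right)
    also have "\<dots> = inner (ev \<theta> - ev \<theta>0) (w - u0)" by (simp add: inner_diff_left)
    also have "\<dots> \<le> norm (ev \<theta> - ev \<theta>0) * norm (w - u0)" by (rule norm_cauchy_schwarz)
    also have "\<dots> \<le> 2 * \<bar>\<theta> - \<theta>0\<bar> * norm (w - u0)" by (intro mult_right_mono ev_lip) auto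
    finally show ?thesis .
  qed
  have DM: "(M has_real_derivative 0) (at \<theta>0)"
    unfolding has_field_derivative_iff M0
  proof (rule tendstoI)
    fix e :: real assume e: "e > 0"
    obtain \<eta> where \<eta>: "\<eta> > 0" "\<forall>\<theta> u. \<bar>\<theta> - \<theta>0\<bar> < \<eta> \<and> F u \<le> 1 \<and> inner (ev \<theta>) u = FU F (ev \<theta>) \<longrightarrow> norm (u - u0) < e/4"
    proof -
      have u0'': "inner (ev \<theta>0) u0 = FU F (ev \<theta>0)" using u0' by (simp add: N_def)
      have e4: "e/4 > 0" using e by simp
      show ?thesis using face_cont[OF n u0(1) u0'' uniq' R e4] that by blast
    qed
    show "\<forall>\<^sub>F y in at \<theta>0. dist ((M y - 0) / (y - \<theta>0)) 0 < e"
      unfolding eventually_at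
    proof (intro exI[of _ \<eta>] conjI ballI impI)
      fix y assume y: "y \<in> UNIV" "y \<noteq> \<theta>0 \<and> dist y \<theta>0 < \<eta>"
      obtain w where w: "F w \<le> 1" "inner (ev y) w = N y"
        using FU_attain[OF n, of "ev y"] by (auto simp: N_def)
      have yd: "\<bar>y - \<theta>0\<bar> < \<eta>" "\<bar>y - \<theta>0\<bar> > 0" using y by (auto simp: dist_real_def)
      have w2: "inner (ev y) w = FU F (ev y)" using w(2) by (simp add: N_def)
      have "norm (w - u0) < e/4" using \<eta>(2) yd(1) w(1) w2 by blast
      then have "M y \<le> 2 * \<bar>y - \<theta>0\<bar> * (e/4)"
        using Mle[OF w] yd by (meson less_imp_le mult_left_mono order_trans zero_le_mult_iff zero_le_numeral abs_ge_zero)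
      then have "\<bar>M y\<bar> / \<bar>y - \<theta>0\<bar> \<le> e/2" using Mnn[of y] yd by (simp add: divide_le_eq)
      then have "\<bar>M y\<bar> / \<bar>y - \<theta>0\<bar> < e" using e by linarith
      then show "dist ((M y - 0) / (y - \<theta>0)) 0 < e" by (simp add: dist_real_def abs_divide)
    qed (rule \<eta>(1))
  qed
  have NM: "N = (\<lambda>\<theta>. M \<theta> + (cos \<theta> * fst u0 + sin \<theta> * snd u0))"
    by (auto simp: fun_eq_iff M_def inner_ev)
  have DN: "(N has_real_derivative (0 + (- sin \<theta>0 * fst u0 + cos \<theta>0 * snd u0))) (at \<theta>0)"
    unfolding NM by (rule derivative_eq_intros DM refl | simp)+
  have Nz: "N \<theta>0 \<noteq> 0" using Npos[of \<theta>0] by simp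
  have "((\<lambda>\<theta>. inverse (N \<theta>)) has_real_derivative - ((0 + (- sin \<theta>0 * fst u0 + cos \<theta>0 * snd u0)) * inverse (N \<theta>0 ^ Suc (Suc 0)))) (at \<theta>0)"
    by (rule DERIV_inverse_fun[OF DN Nz])
  then have "((\<lambda>\<theta>. 1 / N \<theta>) has_real_derivative - ((0 + (- sin \<theta>0 * fst u0 + cos \<theta>0 * snd u0)) * inverse (N \<theta>0 ^ Suc (Suc 0)))) (at \<theta>0)"
    by (simp add: divide_inverse)
  moreover have "rpol F = (\<lambda>\<theta>. 1 / N \<theta>)" using rN by auto
  ultimately show ?thesis unfolding real_differentiable_def by auto
qed

lemma ac_shift: assumes "abs_cont_on {s..s+T} g" shows "abs_cont_on {0..T} (\<lambda>\<tau>. g (s + \<tau>))"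
proof (rule acI)
  fix e :: real assume e: "e > 0"
  obtain d where d: "d > 0" and D: "\<forall>(n::nat) a b.
     (\<forall>i<n. a i \<le> b i \<and> {a i..b i} \<subseteq> {s..s+T}) \<and> disjoint_family_on (\<lambda>i. {a i<..<b i}) {..<n} \<and>
     (\<Sum>i<n. b i - a i) < d \<longrightarrow> (\<Sum>i<n. norm (g (b i) - g (a i))) < e"
    using acD[OF assms e] by blast
  show "\<exists>d>0. \<forall>(n::nat) a b.
     (\<forall>i<n. a i \<le> b i \<and> {a i..b i} \<subseteq> {0..T}) \<and> disjoint_family_on (\<lambda>i. {a i<..<b i}) {..<n} \<and>
     (\<Sum>i<n. b i - a i) < d \<longrightarrow> (\<Sum>i<n. norm (g (s + b i) - g (s + a i))) < e"
  proof (intro exI[of _ d] conjI allI impI)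
    fix n :: nat and a b :: "nat \<Rightarrow> real"
    assume H: "(\<forall>i<n. a i \<le> b i \<and> {a i..b i} \<subseteq> {0..T}) \<and> disjoint_family_on (\<lambda>i. {a i<..<b i}) {..<n} \<and>
     (\<Sum>i<n. b i - a i) < d"
    have "(\<forall>i<n. s + a i \<le> s + b i \<and> {s + a i..s + b i} \<subseteq> {s..s+T}) \<and>
        disjoint_family_on (\<lambda>i. {s + a i<..<s + b i}) {..<n} \<and> (\<Sum>i<n. (s + b i) - (s + a i)) < d"
    proof (intro conjI allI impI)
      fix i assume i: "i < n"
      show "s + a i \<le> s + b i" using H i by auto
      show "{s + a i..s + b i} \<subseteq> {s..s+T}" using H i by fastforce
    next
      show "disjoint_family_on (\<lambda>i. {s + a i<..<s + b i}) {..<n}"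
        unfolding disjoint_family_on_def
      proof (intro ballI impI)
        fix i j assume ij: "i \<in> {..<n}" "j \<in> {..<n}" "i \<noteq> j"
        have "{a i<..<b i} \<inter> {a j<..<b j} = {}" using H ij unfolding disjoint_family_on_def by blast
        show "{s + a i<..<s + b i} \<inter> {s + a j<..<s + b j} = {}"
        proof (rule ccontr)
          assume "{s + a i<..<s + b i} \<inter> {s + a j<..<s + b j} \<noteq> {}"
          then obtain x where "x \<in> {s + a i<..<s + b i}" "x \<in> {s + a j<..<s + b j}" by blast
          then have "x - s \<in> {a i<..<b i} \<inter> {a j<..<b j}" by auto
          then show False using \<open>{a i<..<b i} \<inter> {a j<..<b j} = {}\<close> by blast
        qed
      qed
    next
      show "(\<Sum>i<n. (s + b i) - (s + a i)) < d" using H by simp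
    qed
    then show "(\<Sum>i<n. norm (g (s + b i) - g (s + a i))) < e" using D[rule_format, of n "\<lambda>i. s + a i" "\<lambda>i. s + b i"] by blast
  qed (rule d)
qed

lemma ac_refl: assumes "abs_cont_on {s-T..s} g" shows "abs_cont_on {0..T} (\<lambda>\<tau>. g (s - \<tau>))"
proof (rule acI)
  fix e :: real assume e: "e > 0"
  obtain d where d: "d > 0" and D: "\<forall>(n::nat) a b.
     (\<forall>i<n. a i \<le> b i \<and> {a i..b i} \<subseteq> {s-T..s}) \<and> disjoint_family_on (\<lambda>i. {a i<..<b i}) {..<n} \<and>
     (\<Sum>i<n. b i - a i) < d \<longrightarrow> (\<Sum>i<n. norm (g (b i) - g (a i))) < e"
    using acD[OF assms e] by blast
  show "\<exists>d>0. \<forall>(n::nat) a b.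
     (\<forall>i<n. a i \<le> b i \<and> {a i..b i} \<subseteq> {0..T}) \<and> disjoint_family_on (\<lambda>i. {a i<..<b i}) {..<n} \<and>
     (\<Sum>i<n. b i - a i) < d \<longrightarrow> (\<Sum>i<n. norm (g (s - b i) - g (s - a i))) < e"
  proof (intro exI[of _ d] conjI allI impI)
    fix n :: nat and a b :: "nat \<Rightarrow> real"
    assume H: "(\<forall>i<n. a i \<le> b i \<and> {a i..b i} \<subseteq> {0..T}) \<and> disjoint_family_on (\<lambda>i. {a i<..<b i}) {..<n} \<and>
     (\<Sum>i<n. b i - a i) < d"
    have "(\<forall>i<n. s - b i \<le> s - a i \<and> {s - b i..s - a i} \<subseteq> {s-T..s}) \<and>
        disjoint_family_on (\<lambda>i. {s - b i<..<s - a i}) {..<n} \<and> (\<Sum>i<n. (s - a i) - (s - b i)) < d"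
    proof (intro conjI allI impI)
      fix i assume i: "i < n"
      show "s - b i \<le> s - a i" using H i by auto
      show "{s - b i..s - a i} \<subseteq> {s-T..s}" using H i by fastforce
    next
      show "disjoint_family_on (\<lambda>i. {s - b i<..<s - a i}) {..<n}"
        unfolding disjoint_family_on_def
      proof (intro ballI impI)
        fix i j assume ij: "i \<in> {..<n}" "j \<in> {..<n}" "i \<noteq> j"
        have dj: "{a i<..<b i} \<inter> {a j<..<b j} = {}" using H ij unfolding disjoint_family_on_def by blast
        show "{s - b i<..<s - a i} \<inter> {s - b j<..<s - a j} = {}"
        proof (rule ccontr)
          assume "{s - b i<..<s - a i} \<inter> {s - b j<..<s - a j} \<noteq> {}"
          then obtain x where "x \<in> {s - b i<..<s - a i}" "x \<in> {s - b j<..<s - a j}" by blast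
          then have "s - x \<in> {a i<..<b i} \<inter> {a j<..<b j}" by auto
          then show False using dj by blast
        qed
      qed
    next
      show "(\<Sum>i<n. (s - a i) - (s - b i)) < d" using H by simp
    qed
    then have "(\<Sum>i<n. norm (g (s - a i) - g (s - b i))) < e" using D[rule_format, of n "\<lambda>i. s - b i" "\<lambda>i. s - a i"] by blast
    then show "(\<Sum>i<n. norm (g (s - b i) - g (s - a i))) < e" by (simp add: norm_minus_commute)
  qed (rule d)
qed

lemma null_plus: assumes "N \<in> null_sets lborel" shows "(\<lambda>\<tau>::real. s + \<tau>) -` N \<in> null_sets lborel"
proof -
  have "N \<in> null_sets (distr lborel borel ((+) s))" using assms by (simp add: lborel_distr_plus)
  then have "(+) s -` N \<inter> space lborel \<in> null_sets lborel"
    by (subst (asm) null_sets_distr_iff) auto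
  then show ?thesis by simp
qed

lemma null_uminus: assumes "N \<in> null_sets lborel" shows "(uminus :: real \<Rightarrow> real) -` N \<in> null_sets lborel"
proof -
  have "N \<in> null_sets (distr lborel borel uminus)" using assms by (simp add: lborel_distr_uminus)
  then have "uminus -` N \<inter> space lborel \<in> null_sets lborel"
    by (subst (asm) null_sets_distr_iff) auto
  then show ?thesis by simp
qed

lemma null_minus: assumes "N \<in> null_sets lborel" shows "(\<lambda>\<tau>::real. s - \<tau>) -` N \<in> null_sets lborel"
proof -
  have "(\<lambda>\<tau>::real. s - \<tau>) -` N = uminus -` ((\<lambda>\<tau>. s + \<tau>) -` N)" by auto
  then show ?thesis using null_uminus[OF null_plus[OF assms]] by simp
qed

lemma null_negl: "N \<in> null_sets lborel \<Longrightarrow> negligible N"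
  unfolding negligible_iff_null_sets by (rule null_sets_completionI)

lemma ctrl_field_neg: "ctrl_field p (- w) = - ctrl_field p w"
  by (simp add: ctrl_field_eq field_simps)

lemma ne_null:
  assumes n: "is_norm F" and ne: "normal_ext F g u \<psi>" and p3: "q3 (\<psi> 0) = 0" and p4: "q4 (\<psi> 0) = 0"
  shows "\<exists>N\<in>null_sets lborel. \<forall>t. t \<notin> N \<longrightarrow> (g has_vector_derivative ctrl_field (g t) (u t)) (at t)
        \<and> inner (q1 (\<psi> 0), q2 (\<psi> 0)) (u t) = 1"
proof -
  note ne' = ne[unfolded normal_ext_def]
  have "AE t in lborel. (g has_vector_derivative ctrl_field (g t) (u t)) (at t)
        \<and> fst (hvec (g t) (\<psi> t)) * fst (u t) + snd (hvec (g t) (\<psi> t)) * snd (u t) = FU F (hvec (g t) (\<psi> t))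
        \<and> FU F (hvec (g t) (\<psi> t)) = 1"
    using ne' by (intro AE_conjI) auto
  then obtain N where N: "N \<in> null_sets lborel" "\<And>t. t \<in> space lborel - N \<Longrightarrow>
      (g has_vector_derivative ctrl_field (g t) (u t)) (at t)
        \<and> fst (hvec (g t) (\<psi> t)) * fst (u t) + snd (hvec (g t) (\<psi> t)) * snd (u t) = FU F (hvec (g t) (\<psi> t))
        \<and> FU F (hvec (g t) (\<psi> t)) = 1"
    by (rule AE_E3) blast
  show ?thesis
  proof (intro bexI[OF _ N(1)] allI impI conjI)
    fix t assume t: "t \<notin> N"
    then have P: "(g has_vector_derivative ctrl_field (g t) (u t)) (at t)
        \<and> fst (hvec (g t) (\<psi> t)) * fst (u t) + snd (hvec (g t) (\<psi> t)) * snd (u t) = FU F (hvec (g t) (\<psi> t))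
        \<and> FU F (hvec (g t) (\<psi> t)) = 1" using N(2) by simp
    then show "(g has_vector_derivative ctrl_field (g t) (u t)) (at t)" by blast
    have "fst (hvec (g t) (\<psi> t)) * fst (u t) + snd (hvec (g t) (\<psi> t)) * snd (u t) = 1" using P by metis
    then show "inner (q1 (\<psi> 0), q2 (\<psi> 0)) (u t) = 1" unfolding ne_facts(1)[OF n ne p3 p4] dot_inner .
  qed
qed

lemma F_one: assumes n: "is_norm F" and hc: "FU F h = 1" and w: "F w \<le> 1" "inner h w = 1" shows "F w = 1"
  using FU_le[OF n, of h w] hc w by simp

definition Lf :: "real \<times> real \<Rightarrow> pt4 \<Rightarrow> real" where "Lf h p = fst h * q1 p + snd h * q2 p"

lemma ac_Lf: "abs_cont_on S \<gamma> \<Longrightarrow> abs_cont_on S (\<lambda>t. Lf h (\<gamma> t))"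
  unfolding Lf_def using ac_add[OF ac_scale[OF ac_q(1)] ac_scale[OF ac_q(2)]] by simp

lemma hvd_Lf: "(\<gamma> has_vector_derivative D) (at x within S) \<Longrightarrow>
   ((\<lambda>t. Lf h (\<gamma> t)) has_real_derivative (fst h * q1 D + snd h * q2 D)) (at x within S)"
  unfolding Lf_def by (intro DERIV_add DERIV_cmult hvd_q(1) hvd_q(2))

lemma L_g:
  assumes n: "is_norm F" and ne: "normal_ext F g u \<psi>" and p3: "q3 (\<psi> 0) = 0" and p4: "q4 (\<psi> 0) = 0"
  shows "Lf (q1 (\<psi> 0), q2 (\<psi> 0)) (g t) = t"
proof -
  define h where "h = (q1 (\<psi> 0), q2 (\<psi> 0))"
  obtain N where N: "N \<in> null_sets lborel" "\<And>t. t \<notin> N \<Longrightarrow> (g has_vector_derivative ctrl_field (g t) (u t)) (at t)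
        \<and> inner h (u t) = 1"
    using ne_null[OF n ne p3 p4] unfolding h_def by blast
  have "Lf h (g t) - t = Lf h (g 0) - 0"
  proof (rule deriv_zero_const[OF ac_diff[OF ac_Lf[OF normal_extD(4)[OF ne]] ac_id] null_negl[OF N(1)]])
    fix s assume s: "s \<notin> N"
    have "((\<lambda>t. Lf h (g t)) has_real_derivative (fst h * fst (u s) + snd h * snd (u s))) (at s)"
      using hvd_Lf[OF conjunct1[OF N(2)[OF s]], of h] by (simp add: ctrl_field_eq)
    moreover have "fst h * fst (u s) + snd h * snd (u s) = 1" using N(2)[OF s] dot_inner[of h "u s"] by simp
    ultimately have "((\<lambda>t. Lf h (g t)) has_real_derivative 1) (at s)" by simp
    then show "((\<lambda>t. Lf h (g t) - t) has_real_derivative 0) (at s)"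
      using DERIV_diff[OF _ DERIV_ident] by fastforce
  qed
  moreover have "Lf h (g 0) = 0" using normal_extD(1)[OF ne] by (simp add: Lf_def)
  ultimately show ?thesis unfolding h_def by simp
qed

lemma lower_bound:
  assumes n: "is_norm F" and hc: "FU F h = 1" and adm: "admissible T \<gamma> w"
    and int: "(\<lambda>t. F (w t)) absolutely_integrable_on {0..T}"
  shows "\<bar>Lf h (\<gamma> T) - Lf h (\<gamma> 0)\<bar> \<le> integral {0..T} (\<lambda>t. F (w t))"
proof -
  have T: "0 \<le> T" and ac: "abs_cont_on {0..T} \<gamma>"
    and ae: "AE t in lborel. t \<in> {0..T} \<longrightarrow> (\<gamma> has_vector_derivative ctrl_field (\<gamma> t) (w t)) (at t within {0..T})"
    using adm unfolding admissible_def by auto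
  obtain N where N: "negligible N" "\<forall>t. t \<notin> N \<longrightarrow> (t \<in> {0..T} \<longrightarrow> (\<gamma> has_vector_derivative ctrl_field (\<gamma> t) (w t)) (at t within {0..T}))"
    using ae_negl[OF ae] by blast
  have iF: "(\<lambda>t. F (w t)) integrable_on {0..T}" using int by (simp add: absolutely_integrable_on_def)
  have nn: "\<And>t. t \<in> {0..T} \<Longrightarrow> 0 \<le> F (w t)" using isn_nonneg[OF n] by blast
  have D: "((\<lambda>t. Lf h (\<gamma> t)) has_real_derivative inner h (w t)) (at t within {0..T})"
    if "t \<in> {0..T}" "t \<notin> N" for t
  proof -
    have "((\<lambda>t. Lf h (\<gamma> t)) has_real_derivative (fst h * fst (w t) + snd h * snd (w t))) (at t within {0..T})"
      using hvd_Lf[of \<gamma> "ctrl_field (\<gamma> t) (w t)" t "{0..T}" h] N(2) that by (simp add: ctrl_field_eq)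
    then show ?thesis by (simp add: dot_inner)
  qed
  have le1: "inner h (w t) \<le> F (w t)" for t using FU_le[OF n, of h "w t"] hc by simp
  have le2: "- inner h (w t) \<le> F (w t)" for t using FU_abs_le[OF n, of h "w t"] hc by simp
  have a: "Lf h (\<gamma> T) - Lf h (\<gamma> 0) \<le> integral {0..T} (\<lambda>t. F (w t))"
  proof (rule ftc_le[OF ac_Lf[OF ac] T iF nn N(1)])
    fix t assume "t \<in> {0..<T}" "t \<notin> N"
    then show "\<exists>D. ((\<lambda>t. Lf h (\<gamma> t)) has_real_derivative D) (at t within {0..T}) \<and> D \<le> F (w t)"
      using D le1 by fastforce
  qed
  have b: "(- Lf h (\<gamma> T)) - (- Lf h (\<gamma> 0)) \<le> integral {0..T} (\<lambda>t. F (w t))"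
  proof (rule ftc_le[OF ac_minus[OF ac_Lf[OF ac]] T iF nn N(1)])
    fix t assume "t \<in> {0..<T}" "t \<notin> N"
    then show "\<exists>D. ((\<lambda>t. - Lf h (\<gamma> t)) has_real_derivative D) (at t within {0..T}) \<and> D \<le> F (w t)"
      using DERIV_minus[OF D] le2 by fastforce
  qed
  show ?thesis using a b by linarith
qed

lemma upper_fwd:
  assumes n: "is_norm F" and ne: "normal_ext F g u \<psi>" and p3: "q3 (\<psi> 0) = 0" and p4: "q4 (\<psi> 0) = 0"
    and st: "s \<le> t"
  shows "\<exists>T \<gamma> w. admissible T \<gamma> w \<and> (\<lambda>\<tau>. F (w \<tau>)) absolutely_integrable_on {0..T} \<and> \<gamma> 0 = g s \<and> \<gamma> T = g t
      \<and> integral {0..T} (\<lambda>\<tau>. F (w \<tau>)) = t - s"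
proof -
  define h where "h = (q1 (\<psi> 0), q2 (\<psi> 0))"
  have hc: "FU F h = 1" unfolding h_def by (rule ne_facts(2)[OF n ne p3 p4])
  obtain N where N: "N \<in> null_sets lborel" "\<And>t. t \<notin> N \<Longrightarrow> (g has_vector_derivative ctrl_field (g t) (u t)) (at t)
        \<and> inner h (u t) = 1"
    using ne_null[OF n ne p3 p4] unfolding h_def by blast
  define T where "T = t - s"
  define \<gamma> where "\<gamma> \<tau> = g (s + \<tau>)" for \<tau>
  define w where "w \<tau> = u (s + \<tau>)" for \<tau>
  define N' where "N' = (\<lambda>\<tau>::real. s + \<tau>) -` N"
  have N': "N' \<in> null_sets lborel" unfolding N'_def by (rule null_plus[OF N(1)])
  have F1: "F (w \<tau>) = 1" if "\<tau> \<notin> N'" for \<tau>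
    using F_one[OF n hc normal_extD(3)[OF ne]] N(2) that by (simp add: N'_def w_def)
  have dg: "(\<gamma> has_vector_derivative ctrl_field (\<gamma> \<tau>) (w \<tau>)) (at \<tau>)" if "\<tau> \<notin> N'" for \<tau>
  proof -
    have d1: "((\<lambda>\<tau>. s + \<tau>) has_vector_derivative 1) (at \<tau>)"
      using has_real_derivative_iff_has_vector_derivative[THEN iffD1, OF DERIV_add[OF DERIV_const DERIV_ident]] by simp
    have d2: "(g has_vector_derivative ctrl_field (g (s + \<tau>)) (u (s + \<tau>))) (at (s + \<tau>))"
      using N(2) that by (simp add: N'_def)
    have "(g \<circ> (\<lambda>\<tau>. s + \<tau>) has_vector_derivative 1 *\<^sub>R ctrl_field (g (s + \<tau>)) (u (s + \<tau>))) (at \<tau>)"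
      by (rule vector_diff_chain_at[OF d1 d2])
    moreover have "\<gamma> = g \<circ> (\<lambda>\<tau>. s + \<tau>)" by (rule ext) (simp add: \<gamma>_def)
    ultimately show ?thesis by (simp add: w_def)
  qed
  have um [measurable]: "u \<in> borel_measurable lborel" by (rule normal_extD(2)[OF ne])
  have adm: "admissible T \<gamma> w"
    unfolding admissible_def
  proof (intro conjI)
    show "0 \<le> T" using st by (simp add: T_def)
    show "w \<in> borel_measurable lborel" unfolding w_def by measurable
    show "abs_cont_on {0..T} \<gamma>" unfolding \<gamma>_def T_def using ac_shift[of s "t - s" g] normal_extD(4)[OF ne] by simp
    show "AE \<tau> in lborel. \<tau> \<in> {0..T} \<longrightarrow> (\<gamma> has_vector_derivative ctrl_field (\<gamma> \<tau>) (w \<tau>)) (at \<tau> within {0..T})"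
      by (rule AE_I'[OF N']) (auto intro: has_vector_derivative_at_within dg)
  qed
  have negl: "negligible N'" by (rule null_negl[OF N'])
  have c1: "(\<lambda>\<tau>. 1::real) absolutely_integrable_on {0..T}" by (rule absolutely_integrable_on_const) simp
  have ai: "(\<lambda>\<tau>. F (w \<tau>)) absolutely_integrable_on {0..T}"
    by (rule absolutely_integrable_spike[OF c1 negl]) (use F1 in auto)
  have "integral {0..T} (\<lambda>\<tau>. F (w \<tau>)) = integral {0..T} (\<lambda>\<tau>. 1::real)"
    by (rule integral_spike[OF negl]) (use F1 in auto)
  also have "\<dots> = T" using st by (simp add: T_def)
  finally have "integral {0..T} (\<lambda>\<tau>. F (w \<tau>)) = t - s" by (simp add: T_def)
  moreover have "\<gamma> 0 = g s" "\<gamma> T = g t" by (simp_all add: \<gamma>_def T_def)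
  ultimately show ?thesis using adm ai by blast
qed

lemma upper_bwd:
  assumes n: "is_norm F" and ne: "normal_ext F g u \<psi>" and p3: "q3 (\<psi> 0) = 0" and p4: "q4 (\<psi> 0) = 0"
    and st: "t \<le> s"
  shows "\<exists>T \<gamma> w. admissible T \<gamma> w \<and> (\<lambda>\<tau>. F (w \<tau>)) absolutely_integrable_on {0..T} \<and> \<gamma> 0 = g s \<and> \<gamma> T = g t
      \<and> integral {0..T} (\<lambda>\<tau>. F (w \<tau>)) = s - t"
proof -
  define h where "h = (q1 (\<psi> 0), q2 (\<psi> 0))"
  have hc: "FU F h = 1" unfolding h_def by (rule ne_facts(2)[OF n ne p3 p4])
  obtain N where N: "N \<in> null_sets lborel" "\<And>t. t \<notin> N \<Longrightarrow> (g has_vector_derivative ctrl_field (g t) (u t)) (at t)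
        \<and> inner h (u t) = 1"
    using ne_null[OF n ne p3 p4] unfolding h_def by blast
  define T where "T = s - t"
  define \<gamma> where "\<gamma> \<tau> = g (s - \<tau>)" for \<tau>
  define w where "w \<tau> = - u (s - \<tau>)" for \<tau>
  define N' where "N' = (\<lambda>\<tau>::real. s - \<tau>) -` N"
  have N': "N' \<in> null_sets lborel" unfolding N'_def by (rule null_minus[OF N(1)])
  have F1: "F (w \<tau>) = 1" if "\<tau> \<notin> N'" for \<tau>
    using F_one[OF n hc normal_extD(3)[OF ne]] N(2) that isn_minus[OF n] by (simp add: N'_def w_def)
  have dg: "(\<gamma> has_vector_derivative ctrl_field (\<gamma> \<tau>) (w \<tau>)) (at \<tau>)" if "\<tau> \<notin> N'" for \<tau>
  proof -
    have d1: "((\<lambda>\<tau>. s - \<tau>) has_vector_derivative -1) (at \<tau>)"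
      using has_real_derivative_iff_has_vector_derivative[THEN iffD1, OF DERIV_diff[OF DERIV_const DERIV_ident]] by simp
    have d2: "(g has_vector_derivative ctrl_field (g (s - \<tau>)) (u (s - \<tau>))) (at (s - \<tau>))"
      using N(2) that by (simp add: N'_def)
    have "(g \<circ> (\<lambda>\<tau>. s - \<tau>) has_vector_derivative (-1) *\<^sub>R ctrl_field (g (s - \<tau>)) (u (s - \<tau>))) (at \<tau>)"
      by (rule vector_diff_chain_at[OF d1 d2])
    moreover have "\<gamma> = g \<circ> (\<lambda>\<tau>. s - \<tau>)" by (rule ext) (simp add: \<gamma>_def)
    ultimately show ?thesis by (simp add: w_def ctrl_field_neg)
  qed
  have um [measurable]: "u \<in> borel_measurable lborel" by (rule normal_extD(2)[OF ne])
  have adm: "admissible T \<gamma> w"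
    unfolding admissible_def
  proof (intro conjI)
    show "0 \<le> T" using st by (simp add: T_def)
    show "w \<in> borel_measurable lborel" unfolding w_def by measurable
    show "abs_cont_on {0..T} \<gamma>" unfolding \<gamma>_def T_def using ac_refl[of s "s - t" g] normal_extD(4)[OF ne] by simp
    show "AE \<tau> in lborel. \<tau> \<in> {0..T} \<longrightarrow> (\<gamma> has_vector_derivative ctrl_field (\<gamma> \<tau>) (w \<tau>)) (at \<tau> within {0..T})"
      by (rule AE_I'[OF N']) (auto intro: has_vector_derivative_at_within dg)
  qed
  have negl: "negligible N'" by (rule null_negl[OF N'])
  have c1: "(\<lambda>\<tau>. 1::real) absolutely_integrable_on {0..T}" by (rule absolutely_integrable_on_const) simp
  have ai: "(\<lambda>\<tau>. F (w \<tau>)) absolutely_integrable_on {0..T}"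
    by (rule absolutely_integrable_spike[OF c1 negl]) (use F1 in auto)
  have "integral {0..T} (\<lambda>\<tau>. F (w \<tau>)) = integral {0..T} (\<lambda>\<tau>. 1::real)"
    by (rule integral_spike[OF negl]) (use F1 in auto)
  also have "\<dots> = T" using st by (simp add: T_def)
  finally have "integral {0..T} (\<lambda>\<tau>. F (w \<tau>)) = s - t" by (simp add: T_def)
  moreover have "\<gamma> 0 = g s" "\<gamma> T = g t" by (simp_all add: \<gamma>_def T_def)
  ultimately show ?thesis using adm ai by blast
qed

lemma part4:
  assumes n: "is_norm F" and ne: "normal_ext F g u \<psi>" and p3: "q3 (\<psi> 0) = 0" and p4: "q4 (\<psi> 0) = 0"
  shows "sF_dist F (g s) (g t) = \<bar>s - t\<bar>"
proof -
  define h where "h = (q1 (\<psi> 0), q2 (\<psi> 0))"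
  have hc: "FU F h = 1" unfolding h_def by (rule ne_facts(2)[OF n ne p3 p4])
  define X where "X = {integral {0..T} (\<lambda>t. F (w t)) | T \<gamma> w.
      admissible T \<gamma> w \<and> (\<lambda>t. F (w t)) absolutely_integrable_on {0..T} \<and> \<gamma> 0 = g s \<and> \<gamma> T = g t}"
  have eq: "sF_dist F (g s) (g t) = Inf X" unfolding sF_dist_def X_def ..
  have low: "\<bar>s - t\<bar> \<le> x" if xX: "x \<in> X" for x
  proof -
    obtain T \<gamma> w where x: "x = integral {0..T} (\<lambda>t. F (w t))" and adm: "admissible T \<gamma> w"
      and ai: "(\<lambda>t. F (w t)) absolutely_integrable_on {0..T}" and e0: "\<gamma> 0 = g s" and eT: "\<gamma> T = g t"
      using xX unfolding X_def by blast
    have "\<bar>Lf h (\<gamma> T) - Lf h (\<gamma> 0)\<bar> \<le> x" using lower_bound[OF n hc adm ai] x by simp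
    moreover have "Lf h (\<gamma> T) = t" "Lf h (\<gamma> 0) = s" using L_g[OF n ne p3 p4] e0 eT unfolding h_def by auto
    ultimately show ?thesis by (simp add: abs_minus_commute)
  qed
  have ex: "\<exists>x\<in>X. x = \<bar>s - t\<bar>"
  proof (cases "s \<le> t")
    case True
    then obtain T \<gamma> w where "admissible T \<gamma> w \<and> (\<lambda>\<tau>. F (w \<tau>)) absolutely_integrable_on {0..T} \<and> \<gamma> 0 = g s \<and> \<gamma> T = g t
      \<and> integral {0..T} (\<lambda>\<tau>. F (w \<tau>)) = t - s" using upper_fwd[OF n ne p3 p4] by blast
    then have m: "integral {0..T} (\<lambda>\<tau>. F (w \<tau>)) \<in> X" and v: "integral {0..T} (\<lambda>\<tau>. F (w \<tau>)) = t - s"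
      unfolding X_def by blast+
    then show ?thesis using True by (intro bexI[OF _ m]) simp
  next
    case False
    then obtain T \<gamma> w where "admissible T \<gamma> w \<and> (\<lambda>\<tau>. F (w \<tau>)) absolutely_integrable_on {0..T} \<and> \<gamma> 0 = g s \<and> \<gamma> T = g t
      \<and> integral {0..T} (\<lambda>\<tau>. F (w \<tau>)) = s - t" using upper_bwd[OF n ne p3 p4, of t s] by fastforce
    then have m: "integral {0..T} (\<lambda>\<tau>. F (w \<tau>)) \<in> X" and v: "integral {0..T} (\<lambda>\<tau>. F (w \<tau>)) = s - t"
      unfolding X_def by blast+
    then show ?thesis using False by (intro bexI[OF _ m]) simp
  qed
  then obtain x0 where x0: "x0 \<in> X" "x0 = \<bar>s - t\<bar>" by blast
  have bb: "bdd_below X" using low by (intro bdd_belowI[of _ "\<bar>s - t\<bar>"]) blast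
  have "Inf X \<le> x0" by (rule cInf_lower[OF x0(1) bb])
  moreover have "\<bar>s - t\<bar> \<le> Inf X" by (rule cInf_greatest) (use x0 low in auto)
  ultimately show ?thesis using eq x0 by simp
qed

lemma part3:
  assumes n: "is_norm F" and d: "(rpol F has_real_derivative r') (at \<theta>0)"
  shows "ext_data F \<theta>0 = {\<lambda>t. (fst (ustar F \<theta>0 r') * t, snd (ustar F \<theta>0 r') * t, 0, 0)}"
proof -
  obtain u where u: "F u \<le> 1" "inner (rpol F \<theta>0 *\<^sub>R ev \<theta>0) u = 1" using face_exists[OF n] by blast
  have us: "u = ustar F \<theta>0 r'" by (rule face_unique[OF n d u])
  show ?thesis
  proof
    show "ext_data F \<theta>0 \<subseteq> {\<lambda>t. (fst (ustar F \<theta>0 r') * t, snd (ustar F \<theta>0 r') * t, 0, 0)}"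
      using ext_linear[OF n face_unique[OF n d]] by blast
    show "{\<lambda>t. (fst (ustar F \<theta>0 r') * t, snd (ustar F \<theta>0 r') * t, 0, 0)} \<subseteq> ext_data F \<theta>0"
      using lin_in_ext[OF n u] us by simp
  qed
qed

lemma part2:
  assumes n: "is_norm F"
  shows "(\<exists>a1 a2. ext_data F \<theta>0 = {\<lambda>t. (a1 * t, a2 * t, 0, 0)}) \<longleftrightarrow> rpol F differentiable (at \<theta>0)"
proof
  assume "rpol F differentiable (at \<theta>0)"
  then obtain r' where "(rpol F has_real_derivative r') (at \<theta>0)" by (rule real_differentiableE)
  then show "\<exists>a1 a2. ext_data F \<theta>0 = {\<lambda>t. (a1 * t, a2 * t, 0, 0)}" using part3[OF n] by blast
next
  assume "\<exists>a1 a2. ext_data F \<theta>0 = {\<lambda>t. (a1 * t, a2 * t, 0, 0)}"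
  then obtain a1 a2 where E: "ext_data F \<theta>0 = {\<lambda>t. (a1 * t, a2 * t, 0, 0)}" by blast
  obtain u0 where u0: "F u0 \<le> 1" "inner (rpol F \<theta>0 *\<^sub>R ev \<theta>0) u0 = 1" using face_exists[OF n] by blast
  have ua: "u = (a1, a2)" if "F u \<le> 1" "inner (rpol F \<theta>0 *\<^sub>R ev \<theta>0) u = 1" for u
  proof -
    have "(\<lambda>t. (fst u * t, snd u * t, 0::real, 0::real)) = (\<lambda>t. (a1 * t, a2 * t, 0, 0))"
      using lin_in_ext[OF n that] E by blast
    then have "(fst u * 1, snd u * 1, 0::real, 0::real) = (a1 * 1, a2 * 1, 0, 0)" by meson
    then show ?thesis by (simp add: prod_eq_iff)
  qed
  have "u = u0" if "F u \<le> 1" "inner (rpol F \<theta>0 *\<^sub>R ev \<theta>0) u = 1" for u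
    using ua[OF that] ua[OF u0] by simp
  then show "rpol F differentiable (at \<theta>0)" by (rule diff_unique[OF n u0])
qed

theorem proposition3:
  fixes F :: "real \<times> real \<Rightarrow> real"
  assumes "is_norm F"
  shows
   "(\<forall>g u \<psi> \<theta>. normal_ext F g u \<psi> \<and> fst (snd (snd (\<psi> 0))) = 0 \<and> snd (snd (snd (\<psi> 0))) = 0 \<and>
        continuous_on UNIV \<theta> \<and>
        (\<forall>t. hvec (g t) (\<psi> t) = (rpol F (\<theta> t) * cos (\<theta> t), rpol F (\<theta> t) * sin (\<theta> t)))
      \<longrightarrow> (\<exists>\<theta>0. \<forall>t. \<theta> t = \<theta>0))
    \<and> (\<forall>\<theta>0. (\<exists>a1 a2. ext_data F \<theta>0 = {\<lambda>t. (a1 * t, a2 * t, 0, 0)})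
              \<longleftrightarrow> rpol F differentiable (at \<theta>0))
    \<and> (\<forall>\<theta>0 r'. (rpol F has_real_derivative r') (at \<theta>0) \<longrightarrow>
         ext_data F \<theta>0 =
           {\<lambda>t. ((r' * sin \<theta>0 + rpol F \<theta>0 * cos \<theta>0) / (rpol F \<theta>0)^2 * t,
                  (rpol F \<theta>0 * sin \<theta>0 - r' * cos \<theta>0) / (rpol F \<theta>0)^2 * t, 0, 0)})
    \<and> (\<forall>g u \<psi>. normal_ext F g u \<psi> \<and> fst (snd (snd (\<psi> 0))) = 0 \<and> snd (snd (snd (\<psi> 0))) = 0
         \<longrightarrow> (\<forall>s t. sF_dist F (g s) (g t) = \<bar>s - t\<bar>))"
proof (intro conjI allI impI)
  note n = assms
  fix g u \<psi> and \<theta> :: "real \<Rightarrow> real"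
  assume H: "normal_ext F g u \<psi> \<and> fst (snd (snd (\<psi> 0))) = 0 \<and> snd (snd (snd (\<psi> 0))) = 0 \<and>
        continuous_on UNIV \<theta> \<and>
        (\<forall>t. hvec (g t) (\<psi> t) = (rpol F (\<theta> t) * cos (\<theta> t), rpol F (\<theta> t) * sin (\<theta> t)))"
  then have ne: "normal_ext F g u \<psi>" and p3: "q3 (\<psi> 0) = 0" and p4: "q4 (\<psi> 0) = 0"
    and c: "continuous_on UNIV \<theta>"
    and hv: "\<And>t. hvec (g t) (\<psi> t) = (rpol F (\<theta> t) * cos (\<theta> t), rpol F (\<theta> t) * sin (\<theta> t))" by auto
  have "rpol F (\<theta> t) *\<^sub>R ev (\<theta> t) = (q1 (\<psi> 0), q2 (\<psi> 0))" for t
    using hv[of t] ne_facts(1)[OF n ne p3 p4, of t] by (simp add: ev_def)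
  then have "\<theta> t = \<theta> 0" for t by (rule theta_const[OF n c])
  then show "\<exists>\<theta>0. \<forall>t. \<theta> t = \<theta>0" by blast
next
  fix \<theta>0
  show "(\<exists>a1 a2. ext_data F \<theta>0 = {\<lambda>t. (a1 * t, a2 * t, 0, 0)}) \<longleftrightarrow> rpol F differentiable (at \<theta>0)"
    by (rule part2[OF assms])
next
  fix \<theta>0 r' assume "(rpol F has_real_derivative r') (at \<theta>0)"
  then show "ext_data F \<theta>0 =
           {\<lambda>t. ((r' * sin \<theta>0 + rpol F \<theta>0 * cos \<theta>0) / (rpol F \<theta>0)^2 * t,
                  (rpol F \<theta>0 * sin \<theta>0 - r' * cos \<theta>0) / (rpol F \<theta>0)^2 * t, 0, 0)}"
    using part3[OF assms] by (simp add: ustar_def)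
next
  fix g u \<psi> s t
  assume "normal_ext F g u \<psi> \<and> fst (snd (snd (\<psi> 0))) = 0 \<and> snd (snd (snd (\<psi> 0))) = 0"
  then show "sF_dist F (g s) (g t) = \<bar>s - t\<bar>" using part4[OF assms] by blast
qed

end
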